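(* Let $(X,\mathcal{A},\mu)$ be a $\sigma$-finite measure space and let $(A_n)_{n\in\mathbb{N}}$ be measurable sets of finite measure with $A_n\subseteq A_{n+1}$ for all $n$ and $X=\bigcup_{n=1}^\infty A_n$. Let $\mathcal{S}$ be the set of all measurable simple functions belonging to $L^1(X)$, and let $D:\mathcal{S}\to L^1(X)$ be a linear map. Then $D$ has a unique extension to a doubly stochastic operator on $L^1(X)$ if and only if $D$ is nonnegative (maps nonnegative functions to nonnegative functions) and for every $E\in\mathcal{A}$ with $\mu(E)<\infty$: $$\int_X D\chi_E\,d\mu=\mu(E)\qquad\text{and}\qquad \lim_{n\to\infty}\int_X \chi_E\, D\chi_{A_n}\,d\mu=\mu(E).$$
   Context: A Markov operator on $L^1(X)$ is a positive linear operator $T:L^1(X)\to L^1(X)$ with $\int_X Tf\,d\mu=\int_X f\,d\mu$ for all $f\in L^1(X)$. A Markov operator $T$ is semi-doubly stochastic if $\int_X T^*\chi_E\,d\mu\le\mu(E)$ for every $E\in\mathcal{A}$ with $\mu(E)<\infty$, where $T^*:L^\infty(X)\to L^\infty(X)$ is the Banach adjoint. A semi-doubly stochastic operator $T$ is doubly stochastic if $\int_X T^*g\,d\mu=\int_X g\,d\mu$ for each $g\in L^\infty(X)$. $\chi_E$ denotes the indicator function of $E$. *)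

theory Defs
  imports "HOL-Analysis.Analysis"
begin

text \<open>Elements of L^1(X) are represented by integrable real-valued functions;
  operators on L^1 are maps on functions that send integrable functions to
  integrable functions and respect equality almost everywhere.  All
  identities between elements of L^1 / L^infinity are a.e. identities.\<close>

definition l1_operator :: "'a measure \<Rightarrow> (('a \<Rightarrow> real) \<Rightarrow> ('a \<Rightarrow> real)) \<Rightarrow> bool" where
  "l1_operator M T \<longleftrightarrow>
     (\<forall>f. integrable M f \<longrightarrow> integrable M (T f)) \<and>
     (\<forall>f g. integrable M f \<longrightarrow> integrable M g \<longrightarrow> (AE x in M. f x = g x) \<longrightarrow>
        (AE x in M. T f x = T g x)) \<and>
     (\<forall>f g. integrable M f \<longrightarrow> integrable M g \<longrightarrow>
        (AE x in M. T (\<lambda>y. f y + g y) x = T f x + T g x)) \<and>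
     (\<forall>f c. integrable M f \<longrightarrow> (AE x in M. T (\<lambda>y. c * f y) x = c * T f x))"

definition markov_operator :: "'a measure \<Rightarrow> (('a \<Rightarrow> real) \<Rightarrow> ('a \<Rightarrow> real)) \<Rightarrow> bool" where
  "markov_operator M T \<longleftrightarrow> l1_operator M T \<and>
     (\<forall>f. integrable M f \<longrightarrow> (AE x in M. 0 \<le> f x) \<longrightarrow> (AE x in M. 0 \<le> T f x)) \<and>
     (\<forall>f. integrable M f \<longrightarrow> (\<integral>x. T f x \<partial>M) = (\<integral>x. f x \<partial>M))"

definition linf :: "'a measure \<Rightarrow> ('a \<Rightarrow> real) \<Rightarrow> bool" where
  "linf M g \<longleftrightarrow> g \<in> borel_measurable M \<and> (\<exists>C. AE x in M. \<bar>g x\<bar> \<le> C)"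

definition l1_adjoint :: "'a measure \<Rightarrow> (('a \<Rightarrow> real) \<Rightarrow> ('a \<Rightarrow> real))
    \<Rightarrow> (('a \<Rightarrow> real) \<Rightarrow> ('a \<Rightarrow> real)) \<Rightarrow> bool" where
  "l1_adjoint M T S \<longleftrightarrow>
     (\<forall>g. linf M g \<longrightarrow> linf M (S g) \<and>
        (\<forall>f. integrable M f \<longrightarrow> (\<integral>x. S g x * f x \<partial>M) = (\<integral>x. g x * T f x \<partial>M)))"

definition semi_doubly_stochastic :: "'a measure \<Rightarrow> (('a \<Rightarrow> real) \<Rightarrow> ('a \<Rightarrow> real)) \<Rightarrow> bool" where
  "semi_doubly_stochastic M T \<longleftrightarrow> markov_operator M T \<and>
     (\<exists>S. l1_adjoint M T S \<and>
        (\<forall>E\<in>sets M. emeasure M E < \<infinity> \<longrightarrow>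
           (\<integral>\<^sup>+x. ennreal (S (indicator E) x) \<partial>M) \<le> emeasure M E))"

text \<open>Doubly stochastic: \<integral> T^* g = \<integral> g for g in L^infinity, whenever \<integral> g is
  meaningful: for integrable g (Lebesgue integral) and for nonnegative g
  (extended nonnegative integral).\<close>
definition doubly_stochastic :: "'a measure \<Rightarrow> (('a \<Rightarrow> real) \<Rightarrow> ('a \<Rightarrow> real)) \<Rightarrow> bool" where
  "doubly_stochastic M T \<longleftrightarrow> semi_doubly_stochastic M T \<and>
     (\<exists>S. l1_adjoint M T S \<and>
        (\<forall>g. linf M g \<longrightarrow>
           (integrable M g \<longrightarrow> integrable M (S g) \<and>
              (\<integral>x. S g x \<partial>M) = (\<integral>x. g x \<partial>M)) \<and>
           ((AE x in M. 0 \<le> g x) \<longrightarrow>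
              (\<integral>\<^sup>+x. ennreal (S g x) \<partial>M) = (\<integral>\<^sup>+x. ennreal (g x) \<partial>M))))"

definition simple_L1 :: "'a measure \<Rightarrow> ('a \<Rightarrow> real) set" where
  "simple_L1 M = {f. simple_function M f \<and> integrable M f}"

end

theory Submission
  imports Defs
begin

lemma sL_add: "f \<in> simple_L1 M \<Longrightarrow> g \<in> simple_L1 M \<Longrightarrow> (\<lambda>x. f x + g x) \<in> simple_L1 M"
  by (auto simp: simple_L1_def)
lemma sL_mult: "f \<in> simple_L1 M \<Longrightarrow> (\<lambda>x. c * f x) \<in> simple_L1 M"
  by (auto simp: simple_L1_def)
lemma sL_diff: "f \<in> simple_L1 M \<Longrightarrow> g \<in> simple_L1 M \<Longrightarrow> (\<lambda>x. f x - g x) \<in> simple_L1 M"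
  by (auto simp: simple_L1_def)
lemma sL_min: "f \<in> simple_L1 M \<Longrightarrow> g \<in> simple_L1 M \<Longrightarrow> (\<lambda>x. min (f x) (g x)) \<in> simple_L1 M"
  by (auto simp: simple_L1_def intro: simple_function_compose2)
lemma sL_max: "f \<in> simple_L1 M \<Longrightarrow> g \<in> simple_L1 M \<Longrightarrow> (\<lambda>x. max (f x) (g x)) \<in> simple_L1 M"
  by (auto simp: simple_L1_def intro: simple_function_compose2)
lemma sL_zero: "(\<lambda>x. 0) \<in> simple_L1 M"
  by (auto simp: simple_L1_def)
lemma sL_ind: "E \<in> sets M \<Longrightarrow> emeasure M E < \<infinity> \<Longrightarrow> indicator E \<in> simple_L1 M"
  by (auto simp: simple_L1_def integrable_indicator_iff Int_absorb2 sets.sets_into_space)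
lemma sL_pos: "f \<in> simple_L1 M \<Longrightarrow> (\<lambda>x. max (f x) 0) \<in> simple_L1 M"
  using sL_max[OF _ sL_zero] by auto
lemma sL_neg: "f \<in> simple_L1 M \<Longrightarrow> (\<lambda>x. max (- f x) 0) \<in> simple_L1 M"
  using sL_pos[OF sL_mult[of f M "-1"]] by simp

locale dsetup =
  fixes M :: "'a measure" and A :: "nat \<Rightarrow> 'a set"
    and D :: "('a \<Rightarrow> real) \<Rightarrow> ('a \<Rightarrow> real)"
  assumes sf: "sigma_finite_measure M"
    and A_sets: "\<And>n. A n \<in> sets M"
    and A_fin: "\<And>n. emeasure M (A n) < \<infinity>"
    and A_mono: "\<And>n. A n \<subseteq> A (Suc n)"
    and A_cover: "(\<Union>n. A n) = space M"
    and D_L1: "\<And>f. f \<in> simple_L1 M \<Longrightarrow> integrable M (D f)"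
    and D_welldef: "\<And>f g. f \<in> simple_L1 M \<Longrightarrow> g \<in> simple_L1 M \<Longrightarrow>
        (AE x in M. f x = g x) \<Longrightarrow> (AE x in M. D f x = D g x)"
    and D_add: "\<And>f g. f \<in> simple_L1 M \<Longrightarrow> g \<in> simple_L1 M \<Longrightarrow>
        (AE x in M. D (\<lambda>y. f y + g y) x = D f x + D g x)"
    and D_scale: "\<And>f c. f \<in> simple_L1 M \<Longrightarrow>
        (AE x in M. D (\<lambda>y. c * f y) x = c * D f x)"
begin

lemma D_meas[measurable]: "f \<in> simple_L1 M \<Longrightarrow> D f \<in> borel_measurable M"
  using D_L1 by auto

lemma D_diff: assumes "f \<in> simple_L1 M" "g \<in> simple_L1 M"
  shows "AE x in M. D (\<lambda>y. f y - g y) x = D f x - D g x"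
proof -
  have e: "(\<lambda>y. f y - g y) = (\<lambda>y. f y + (\<lambda>y. (-1) * g y) y)" by auto
  show ?thesis
    using D_add[OF assms(1) sL_mult[OF assms(2), of "-1"]] D_scale[OF assms(2), of "-1"]
    unfolding e by eventually_elim auto
qed

lemma D_zero: "AE x in M. D (\<lambda>y. 0) x = 0"
  using D_scale[OF sL_zero, of 0] by simp

lemma A_incseq: "incseq A"
  using A_mono by (simp add: incseq_SucI)

lemma A_eventually: "x \<in> space M \<Longrightarrow> eventually (\<lambda>n. x \<in> A n) sequentially"
proof -
  assume "x \<in> space M"
  then obtain n where "x \<in> A n" using A_cover by auto
  then show ?thesis unfolding eventually_sequentially
    using A_incseq by (auto simp: incseq_def)
qed

lemma A_ind_lim: assumes x: "x \<in> space M" shows "(\<lambda>n. indicator (A n) x :: real) \<longlonglongrightarrow> 1"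
  by (rule tendsto_eventually, rule eventually_mono[OF A_eventually[OF x]]) simp

end

context dsetup begin

lemma sL_level_set:
  assumes f: "f \<in> simple_L1 M" and y: "y \<in> f ` space M" "y \<noteq> 0"
  shows "f -` {y} \<inter> space M \<in> sets M" "emeasure M (f -` {y} \<inter> space M) < \<infinity>"
proof -
  have sf: "simple_function M f" and int: "integrable M f" using f by (auto simp: simple_L1_def)
  show E: "f -` {y} \<inter> space M \<in> sets M" using simple_functionD(2)[OF sf] .
  have "integrable M (indicator (f -` {y} \<inter> space M) :: _ \<Rightarrow> real)"
  proof (rule Bochner_Integration.integrable_bound[where f="\<lambda>x. f x / y"])
    show "integrable M (\<lambda>x. f x / y)" using int by simp
    show "indicat_real (f -` {y} \<inter> space M) \<in> borel_measurable M" using E by simp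
    show "AE x in M. norm (indicat_real (f -` {y} \<inter> space M) x) \<le> norm (f x / y)"
      using y(2) by (auto split: split_indicator)
  qed
  then show "emeasure M (f -` {y} \<inter> space M) < \<infinity>"
    by (simp add: integrable_indicator_iff Int_absorb2)
qed

end

locale dpos = dsetup +
  assumes D_pos: "\<And>f. f \<in> simple_L1 M \<Longrightarrow> (AE x in M. 0 \<le> f x) \<Longrightarrow> (AE x in M. 0 \<le> D f x)"
    and D_ind: "\<And>E. E \<in> sets M \<Longrightarrow> emeasure M E < \<infinity> \<Longrightarrow> (\<integral>x. D (indicator E) x \<partial>M) = measure M E"
    and D_lim: "\<And>E. E \<in> sets M \<Longrightarrow> emeasure M E < \<infinity> \<Longrightarrow>
       (\<lambda>n. \<integral>x. indicator E x * D (indicator (A n)) x \<partial>M) \<longlonglongrightarrow> measure M E"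
begin

lemma D_mono:
  assumes f: "f \<in> simple_L1 M" and g: "g \<in> simple_L1 M" and le: "AE x in M. f x \<le> g x"
  shows "AE x in M. D f x \<le> D g x"
proof -
  have "AE x in M. 0 \<le> D (\<lambda>y. g y - f y) x"
    using le by (intro D_pos sL_diff g f) auto
  then show ?thesis using D_diff[OF g f] by eventually_elim auto
qed

lemma D_integral:
  assumes f: "f \<in> simple_L1 M"
  shows "(\<integral>x. D f x \<partial>M) = (\<integral>x. f x \<partial>M)"
proof -
  define V where "V = f ` space M - {0}"
  define E where "E y = f -` {y} \<inter> space M" for y
  define \<phi> where "\<phi> F = (\<lambda>x. \<Sum>y\<in>F. y * indicator (E y) x :: real)" for F
  have finV: "finite V" using f by (auto simp: simple_L1_def simple_function_def V_def)
  have Ey: "E y \<in> sets M" "emeasure M (E y) < \<infinity>" if "y \<in> V" for y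
    using sL_level_set[OF f] that by (auto simp: V_def E_def)
  have "\<phi> F \<in> simple_L1 M \<and> (\<integral>x. D (\<phi> F) x \<partial>M) = (\<integral>x. \<phi> F x \<partial>M)" if "F \<subseteq> V" for F
    using finite_subset[OF that finV] that
  proof (induction F rule: finite_induct)
    case empty
    have "\<phi> {} = (\<lambda>x. 0)" by (simp add: \<phi>_def)
    moreover have "(\<integral>x. D (\<lambda>x. 0) x \<partial>M) = 0"
      using integral_cong_AE[OF D_meas[OF sL_zero] _ D_zero] by simp
    ultimately show ?case by (simp add: sL_zero)
  next
    case (insert a F)
    have aV: "a \<in> V" using insert by auto
    have ind: "indicator (E a) \<in> simple_L1 M" using Ey[OF aV] by (rule sL_ind)
    have i1: "(\<lambda>x. a * indicator (E a) x) \<in> simple_L1 M" using sL_mult[OF ind] .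
    have IH: "\<phi> F \<in> simple_L1 M" "(\<integral>x. D (\<phi> F) x \<partial>M) = (\<integral>x. \<phi> F x \<partial>M)" using insert by auto
    have eq: "\<phi> (insert a F) = (\<lambda>x. a * indicator (E a) x + \<phi> F x)"
      by (rule ext) (simp only: \<phi>_def sum.insert[OF insert(1,2)])
    have s: "\<phi> (insert a F) \<in> simple_L1 M" unfolding eq by (rule sL_add[OF i1 IH(1)])
    have "AE x in M. D (\<phi> (insert a F)) x = a * D (indicator (E a)) x + D (\<phi> F) x"
      using D_add[OF i1 IH(1)] D_scale[OF ind, of a] unfolding eq by eventually_elim auto
    then have "(\<integral>x. D (\<phi> (insert a F)) x \<partial>M) = (\<integral>x. a * D (indicator (E a)) x + D (\<phi> F) x \<partial>M)"
      by (intro integral_cong_AE) (auto intro!: D_meas s ind IH(1) borel_measurable_add borel_measurable_times)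
    also have "\<dots> = a * measure M (E a) + (\<integral>x. \<phi> F x \<partial>M)"
      using D_L1[OF ind] D_L1[OF IH(1)] D_ind[OF Ey[OF aV]] IH(2) by simp
    also have "\<dots> = (\<integral>x. \<phi> (insert a F) x \<partial>M)"
    proof -
      have "(\<integral>x. a * indicator (E a) x + \<phi> F x \<partial>M) = (\<integral>x. a * indicator (E a) x \<partial>M) + (\<integral>x. \<phi> F x \<partial>M)"
        by (rule Bochner_Integration.integral_add) (use i1 IH(1) in \<open>auto simp: simple_L1_def\<close>)
      then show ?thesis unfolding eq
        using Int_absorb2[OF sets.sets_into_space[OF Ey(1)[OF aV]]] by simp
    qed
    finally show ?case using s by simp
  qed
  from this[OF order_refl] have P: "\<phi> V \<in> simple_L1 M" "(\<integral>x. D (\<phi> V) x \<partial>M) = (\<integral>x. \<phi> V x \<partial>M)" by auto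
  have pt: "f x = \<phi> V x" if "x \<in> space M" for x
  proof (cases "f x = 0")
    case True
    then have "\<forall>y\<in>V. indicator (E y) x = (0::real)" by (auto simp: V_def E_def)
    then show ?thesis using True by (simp add: \<phi>_def)
  next
    case False
    then have "f x \<in> V" using that by (auto simp: V_def)
    then have "\<phi> V x = (\<Sum>y\<in>V. if y = f x then f x else 0)"
      unfolding \<phi>_def using that by (intro sum.cong) (auto simp: E_def split: split_indicator)
    also have "\<dots> = f x" using \<open>f x \<in> V\<close> finV by simp
    finally show ?thesis by simp
  qed
  have "AE x in M. D f x = D (\<phi> V) x" using pt by (intro D_welldef f P(1)) auto
  then have "(\<integral>x. D f x \<partial>M) = (\<integral>x. D (\<phi> V) x \<partial>M)"
    by (intro integral_cong_AE) (auto intro: D_meas f P(1))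
  also have "\<dots> = (\<integral>x. f x \<partial>M)" using P(2) pt by (simp cong: Bochner_Integration.integral_cong)
  finally show ?thesis .
qed

end

context dpos begin

definition seqs :: "('a \<Rightarrow> real) \<Rightarrow> (nat \<Rightarrow> 'a \<Rightarrow> real) set" where
  "seqs f = {s. (\<forall>k. s k \<in> simple_L1 M) \<and> (\<forall>k. \<forall>x\<in>space M. 0 \<le> s k x \<and> s k x \<le> s (Suc k) x)
      \<and> (\<forall>x\<in>space M. (\<lambda>k. s k x) \<longlonglongrightarrow> f x)}"

definition Lsup :: "(nat \<Rightarrow> 'a \<Rightarrow> real) \<Rightarrow> 'a \<Rightarrow> ennreal" where
  "Lsup s x = (SUP k. ennreal (D (s k) x))"

definition nnint :: "('a \<Rightarrow> real) \<Rightarrow> bool" where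
  "nnint f \<longleftrightarrow> integrable M f \<and> (\<forall>x\<in>space M. 0 \<le> f x)"

lemma seqsD:
  assumes "s \<in> seqs f"
  shows "\<And>k. s k \<in> simple_L1 M" "\<And>k x. x \<in> space M \<Longrightarrow> 0 \<le> s k x"
    "\<And>k x. x \<in> space M \<Longrightarrow> s k x \<le> s (Suc k) x"
    "\<And>x. x \<in> space M \<Longrightarrow> (\<lambda>k. s k x) \<longlonglongrightarrow> f x"
  using assms by (auto simp: seqs_def)

lemma seqs_incseq: "s \<in> seqs f \<Longrightarrow> x \<in> space M \<Longrightarrow> incseq (\<lambda>k. s k x)"
  by (rule incseq_SucI) (auto dest: seqsD)

lemma seqs_le: assumes "s \<in> seqs f" "x \<in> space M" shows "s k x \<le> f x"
  using incseq_le[OF seqs_incseq[OF assms] seqsD(4)[OF assms]] by simp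

lemma Lsup_meas[measurable]: "s \<in> seqs f \<Longrightarrow> Lsup s \<in> borel_measurable M"
  unfolding Lsup_def[abs_def] using seqsD(1) by measurable

lemma D_seq_nonneg: "s \<in> seqs f \<Longrightarrow> AE x in M. \<forall>k. 0 \<le> D (s k) x"
  unfolding AE_all_countable by (auto intro!: D_pos dest: seqsD)

lemma D_seq_mono: "s \<in> seqs f \<Longrightarrow> AE x in M. \<forall>k. D (s k) x \<le> D (s (Suc k)) x"
  unfolding AE_all_countable by (auto intro!: D_mono dest: seqsD)

lemma L_mono:
  assumes s: "s \<in> seqs f" and t: "t \<in> seqs g" and fg: "AE x in M. f x \<le> g x"
  shows "AE x in M. Lsup s x \<le> Lsup t x"
proof -
  have "AE x in M. ennreal (D (s k) x) \<le> Lsup t x" for k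
  proof -
    define r where "r j = (\<lambda>x. s k x - min (s k x) (t j x))" for j
    have sk: "s k \<in> simple_L1 M" using seqsD(1)[OF s] .
    have mn: "(\<lambda>x. min (s k x) (t j x)) \<in> simple_L1 M" for j using sL_min[OF sk seqsD(1)[OF t]] .
    have rL: "r j \<in> simple_L1 M" for j unfolding r_def using sL_diff[OF sk mn] .
    have bnd: "AE x in M. ennreal (D (s k) x) - Lsup t x \<le> ennreal (D (r j) x)" for j
    proof -
      have a1: "AE x in M. D (r j) x = D (s k) x - D (\<lambda>x. min (s k x) (t j x)) x"
        unfolding r_def using D_diff[OF sk mn] .
      have a2: "AE x in M. D (\<lambda>x. min (s k x) (t j x)) x \<le> D (t j) x"
        by (rule D_mono[OF mn seqsD(1)[OF t]]) auto
      have a3: "AE x in M. 0 \<le> D (r j) x"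
        by (rule D_pos[OF rL]) (auto simp: r_def)
      from a1 a2 a3 D_seq_nonneg[OF t] show ?thesis
      proof eventually_elim
        case (elim x)
        have "ennreal (D (t j) x) \<le> Lsup t x" unfolding Lsup_def by (rule SUP_upper) auto
        moreover have "ennreal (D (s k) x) \<le> ennreal (D (t j) x) + ennreal (D (r j) x)"
          using elim by (simp add: ennreal_plus[symmetric] del: ennreal_plus)
        ultimately have "ennreal (D (s k) x) \<le> Lsup t x + ennreal (D (r j) x)"
          by (meson add_right_mono order_trans)
        then show ?case by (simp add: ennreal_minus_le_iff)
      qed
    qed
    have int_r: "(\<lambda>j. \<integral>x. r j x \<partial>M) \<longlonglongrightarrow> (\<integral>x. 0 \<partial>M)"
    proof (rule integral_dominated_convergence[where w="s k"])
      show "integrable M (s k)" using sk by (simp add: simple_L1_def)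
      show "(\<lambda>x. 0::real) \<in> borel_measurable M" by simp
      show "r j \<in> borel_measurable M" for j using rL by (auto simp: simple_L1_def)
      show "AE x in M. norm (r j x) \<le> s k x" for j
        using seqsD(2)[OF s] seqsD(2)[OF t] by (auto simp: r_def)
      show "AE x in M. (\<lambda>j. r j x) \<longlonglongrightarrow> 0"
        using fg AE_space
      proof eventually_elim
        case (elim x)
        then have True: "x \<in> space M" by simp
        have "(\<lambda>j. s k x - min (s k x) (t j x)) \<longlonglongrightarrow> s k x - min (s k x) (g x)"
          by (intro tendsto_intros seqsD(4)[OF t True])
        moreover have "s k x \<le> g x" using seqs_le[OF s True, of k] elim by simp
        ultimately show ?case by (simp add: r_def)
      qed
    qed
    have intDr: "(\<integral>\<^sup>+x. ennreal (D (r j) x) \<partial>M) = ennreal (\<integral>x. r j x \<partial>M)" for j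
    proof -
      have "(\<integral>\<^sup>+x. ennreal (D (r j) x) \<partial>M) = ennreal (\<integral>x. D (r j) x \<partial>M)"
        by (rule nn_integral_eq_integral[OF D_L1[OF rL] D_pos[OF rL]]) (auto simp: r_def)
      then show ?thesis using D_integral[OF rL] by simp
    qed
    have le: "(\<integral>\<^sup>+x. ennreal (D (s k) x) - Lsup t x \<partial>M) \<le> ennreal (\<integral>x. r j x \<partial>M)" for j
      using nn_integral_mono_AE[OF bnd[of j]] intDr[of j] by simp
    have "(\<integral>\<^sup>+x. ennreal (D (s k) x) - Lsup t x \<partial>M) \<le> ennreal 0"
      by (rule LIMSEQ_le_const[OF tendsto_ennrealI[OF int_r[simplified]]]) (use le in auto)
    then have "(\<integral>\<^sup>+x. ennreal (D (s k) x) - Lsup t x \<partial>M) = 0" by simp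
    then have "AE x in M. ennreal (D (s k) x) - Lsup t x = 0"
      by (subst (asm) nn_integral_0_iff_AE) (use sk t in auto)
    then show ?thesis by eventually_elim (simp add: ennreal_minus_eq_0)
  qed
  then have "AE x in M. \<forall>k. ennreal (D (s k) x) \<le> Lsup t x" by (simp add: AE_all_countable)
  then show ?thesis by eventually_elim (simp add: Lsup_def SUP_le_iff)
qed

end

context dpos begin

lemma nnintD: "nnint f \<Longrightarrow> integrable M f" "nnint f \<Longrightarrow> x \<in> space M \<Longrightarrow> 0 \<le> f x"
  by (auto simp: nnint_def)

lemma nnint_meas[measurable_dest]: "nnint f \<Longrightarrow> f \<in> borel_measurable M"
  by (auto simp: nnint_def)

lemma seqs_ex:
  assumes f: "nnint f"
  shows "\<exists>s. s \<in> seqs f"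
proof -
  define u where "u x = max (f x) 0" for x
  have fm: "f \<in> borel_measurable M" using nnint_meas[OF f] .
  have u: "u \<in> borel_measurable M" "\<And>x. 0 \<le> u x" using fm by (auto simp: u_def[abs_def])
  from borel_measurable_implies_simple_function_sequence_real[OF u]
  obtain s where s: "incseq s" "\<And>i. simple_function M (s i)" "\<And>x. bdd_above (range (\<lambda>i. s i x))"
    "\<And>i x. 0 \<le> s i x" "u = (SUP i. s i)" by blast
  have inc: "incseq (\<lambda>i. s i x)" for x using s(1) by (auto simp: incseq_def le_fun_def)
  have lim: "(\<lambda>i. s i x) \<longlonglongrightarrow> u x" for x
  proof -
    have "(\<lambda>i. s i x) \<longlonglongrightarrow> (SUP i. s i x)" by (rule LIMSEQ_incseq_SUP[OF s(3) inc])
    moreover have "u x = (SUP i. s i x)" using s(5) by (simp add: image_image)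
    ultimately show ?thesis by simp
  qed
  have le: "s i x \<le> u x" for i x using incseq_le[OF inc lim] by simp
  have "s i \<in> simple_L1 M" for i
  proof -
    have "integrable M (s i)"
    proof (rule Bochner_Integration.integrable_bound[where f=f])
      show "integrable M f" using f by (simp add: nnint_def)
      show "s i \<in> borel_measurable M" using s(2) by (simp add: borel_measurable_simple_function)
      show "AE x in M. norm (s i x) \<le> norm (f x)"
      proof (rule AE_I2)
        fix x assume "x \<in> space M"
        then show "norm (s i x) \<le> norm (f x)" using le[of i x] s(4)[of i x] f by (auto simp: u_def nnint_def)
      qed
    qed
    then show ?thesis using s(2) by (simp add: simple_L1_def)
  qed
  moreover have "\<forall>x\<in>space M. (\<lambda>k. s k x) \<longlonglongrightarrow> f x"
  proof
    fix x assume "x \<in> space M"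
    then have "u x = f x" using f by (auto simp: u_def nnint_def)
    then show "(\<lambda>k. s k x) \<longlonglongrightarrow> f x" using lim[of x] by simp
  qed
  ultimately have "s \<in> seqs f" using s(4) inc by (auto simp: seqs_def incseq_Suc_iff)
  then show ?thesis by blast
qed

lemma Lsup_integral:
  assumes s: "s \<in> seqs f" and f: "nnint f"
  shows "(\<integral>\<^sup>+x. Lsup s x \<partial>M) = ennreal (\<integral>x. f x \<partial>M)"
proof -
  have sL: "s k \<in> simple_L1 M" for k using seqsD(1)[OF s] .
  have "(\<integral>\<^sup>+x. Lsup s x \<partial>M) = (SUP k. \<integral>\<^sup>+x. ennreal (D (s k) x) \<partial>M)"
    unfolding Lsup_def
  proof (rule nn_integral_monotone_convergence_SUP_AE)
    show "AE x in M. ennreal (D (s i) x) \<le> ennreal (D (s (Suc i)) x)" for i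
      using D_seq_mono[OF s] by eventually_elim (simp add: ennreal_leI)
    show "(\<lambda>x. ennreal (D (s i) x)) \<in> borel_measurable M" for i using sL by measurable
  qed
  also have "\<dots> = (SUP k. ennreal (\<integral>x. s k x \<partial>M))"
  proof (rule SUP_cong[OF refl])
    fix k
    have "(\<integral>\<^sup>+x. ennreal (D (s k) x) \<partial>M) = ennreal (\<integral>x. D (s k) x \<partial>M)"
      by (rule nn_integral_eq_integral[OF D_L1[OF sL] D_pos[OF sL AE_I2[OF seqsD(2)[OF s]]]])
    then show "(\<integral>\<^sup>+x. ennreal (D (s k) x) \<partial>M) = ennreal (\<integral>x. s k x \<partial>M)"
      using D_integral[OF sL] by simp
  qed
  also have "\<dots> = ennreal (\<integral>x. f x \<partial>M)"
  proof -
    have inc: "incseq (\<lambda>k. ennreal (\<integral>x. s k x \<partial>M))"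
    proof (rule incseq_SucI, rule ennreal_leI, rule integral_mono)
      fix k
      show "integrable M (s k)" "integrable M (s (Suc k))" using sL by (auto simp: simple_L1_def)
      show "s k x \<le> s (Suc k) x" if "x \<in> space M" for x using seqsD(3)[OF s that] .
    qed
    have "(\<lambda>k. \<integral>x. s k x \<partial>M) \<longlonglongrightarrow> (\<integral>x. f x \<partial>M)"
    proof (rule integral_dominated_convergence[where w=f])
      show "integrable M f" "f \<in> borel_measurable M" using f by (auto simp: nnint_def)
      show "s k \<in> borel_measurable M" for k using sL by (auto simp: simple_L1_def)
      show "AE x in M. (\<lambda>k. s k x) \<longlonglongrightarrow> f x" using seqsD(4)[OF s] by auto
      show "AE x in M. norm (s k x) \<le> f x" for k
        using seqsD(2)[OF s] seqs_le[OF s] by auto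
    qed
    then have "(\<lambda>k. ennreal (\<integral>x. s k x \<partial>M)) \<longlonglongrightarrow> ennreal (\<integral>x. f x \<partial>M)"
      by (rule tendsto_ennrealI)
    from LIMSEQ_unique[OF LIMSEQ_SUP[OF inc] this] show ?thesis .
  qed
  finally show ?thesis .
qed

definition sq :: "('a \<Rightarrow> real) \<Rightarrow> (nat \<Rightarrow> 'a \<Rightarrow> real)" where
  "sq f = (SOME s. s \<in> seqs f)"

definition Tp :: "('a \<Rightarrow> real) \<Rightarrow> ('a \<Rightarrow> real)" where
  "Tp f x = enn2real (Lsup (sq f) x)"

lemma sq_seqs: "nnint f \<Longrightarrow> sq f \<in> seqs f"
  unfolding sq_def using seqs_ex by (rule someI_ex)

lemma Tp_meas[measurable]: "nnint f \<Longrightarrow> Tp f \<in> borel_measurable M"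
  unfolding Tp_def[abs_def] using sq_seqs by measurable

lemma Tp_nonneg: "0 \<le> Tp f x"
  by (simp add: Tp_def)

lemma Tp_eq:
  assumes f: "nnint f" and s: "s \<in> seqs f"
  shows "AE x in M. ennreal (Tp f x) = Lsup s x"
proof -
  have fin: "AE x in M. Lsup s x \<noteq> \<infinity>"
    by (rule nn_integral_PInf_AE) (use Lsup_integral[OF s f] s in auto)
  have "AE x in M. Lsup (sq f) x \<le> Lsup s x" by (rule L_mono[OF sq_seqs[OF f] s]) auto
  moreover have "AE x in M. Lsup s x \<le> Lsup (sq f) x" by (rule L_mono[OF s sq_seqs[OF f]]) auto
  ultimately show ?thesis using fin
    by eventually_elim (simp add: Tp_def ennreal_enn2real_if top_unique)
qed

lemma Tp_int:
  assumes f: "nnint f"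
  shows "integrable M (Tp f)" "(\<integral>x. Tp f x \<partial>M) = (\<integral>x. f x \<partial>M)"
proof -
  have e: "(\<integral>\<^sup>+x. ennreal (Tp f x) \<partial>M) = ennreal (\<integral>x. f x \<partial>M)"
    using nn_integral_cong_AE[OF Tp_eq[OF f sq_seqs[OF f]]] Lsup_integral[OF sq_seqs[OF f] f] by simp
  show i: "integrable M (Tp f)"
    by (rule integrableI_nonneg) (use e f in \<open>auto simp: Tp_nonneg\<close>)
  have "ennreal (\<integral>x. Tp f x \<partial>M) = ennreal (\<integral>x. f x \<partial>M)"
    using e nn_integral_eq_integral[OF i] by (simp add: Tp_nonneg)
  moreover have "0 \<le> (\<integral>x. f x \<partial>M)" using f by (auto simp: nnint_def intro!: integral_nonneg_AE)
  ultimately show "(\<integral>x. Tp f x \<partial>M) = (\<integral>x. f x \<partial>M)"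
    by (simp add: Tp_nonneg integral_nonneg_AE)
qed

lemma Tp_mono:
  assumes f: "nnint f" and g: "nnint g" and le: "AE x in M. f x \<le> g x"
  shows "AE x in M. Tp f x \<le> Tp g x"
  using L_mono[OF sq_seqs[OF f] sq_seqs[OF g] le] Tp_eq[OF f sq_seqs[OF f]] Tp_eq[OF g sq_seqs[OF g]]
  by eventually_elim (metis ennreal_le_iff Tp_nonneg)

lemma Tp_cong:
  assumes f: "nnint f" and g: "nnint g" and eq: "AE x in M. f x = g x"
  shows "AE x in M. Tp f x = Tp g x"
proof -
  have "AE x in M. f x \<le> g x" "AE x in M. g x \<le> f x" using eq by (auto elim!: eventually_mono)
  from Tp_mono[OF f g this(1)] Tp_mono[OF g f this(2)] show ?thesis by eventually_elim simp
qed

lemma Tp_D: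
  assumes f: "f \<in> simple_L1 M" and nn: "\<And>x. x \<in> space M \<Longrightarrow> 0 \<le> f x"
  shows "AE x in M. Tp f x = D f x"
proof -
  have nf: "nnint f" using f nn by (auto simp: nnint_def simple_L1_def)
  have s: "(\<lambda>k. f) \<in> seqs f" using f nn by (auto simp: seqs_def)
  have "AE x in M. 0 \<le> D f x" using D_pos[OF f] nn by auto
  with Tp_eq[OF nf s] show ?thesis
    by eventually_elim (simp add: Lsup_def Tp_nonneg)
qed

end

lemma SUP_integral_incseq:
  fixes f :: "nat \<Rightarrow> 'a \<Rightarrow> real"
  assumes fi: "\<And>k. integrable M (f k)" and g: "integrable M g"
    and nn: "\<And>k x. x \<in> space M \<Longrightarrow> 0 \<le> f k x"
    and mono: "\<And>k x. x \<in> space M \<Longrightarrow> f k x \<le> f (Suc k) x"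
    and lim: "\<And>x. x \<in> space M \<Longrightarrow> (\<lambda>k. f k x) \<longlonglongrightarrow> g x"
  shows "(SUP k. ennreal (\<integral>x. f k x \<partial>M)) = ennreal (\<integral>x. g x \<partial>M)"
proof -
  have inc: "incseq (\<lambda>k. ennreal (\<integral>x. f k x \<partial>M))"
  proof (rule incseq_SucI, rule ennreal_leI, rule integral_mono)
    fix k
    show "integrable M (f k)" "integrable M (f (Suc k))" using fi by auto
    show "f k x \<le> f (Suc k) x" if "x \<in> space M" for x using mono[OF that] .
  qed
  have le: "f k x \<le> g x" if "x \<in> space M" for k x
    using incseq_le[OF incseq_SucI[of "\<lambda>k. f k x", OF mono[OF that]] lim[OF that]] by simp
  have "(\<lambda>k. \<integral>x. f k x \<partial>M) \<longlonglongrightarrow> (\<integral>x. g x \<partial>M)"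
  proof (rule integral_dominated_convergence[where w=g])
    show "integrable M g" "g \<in> borel_measurable M" using g by auto
    show "f k \<in> borel_measurable M" for k using fi by auto
    show "AE x in M. (\<lambda>k. f k x) \<longlonglongrightarrow> g x" using lim by auto
    show "AE x in M. norm (f k x) \<le> g x" for k
      by (rule AE_I2) (use nn le in auto)
  qed
  then have "(\<lambda>k. ennreal (\<integral>x. f k x \<partial>M)) \<longlonglongrightarrow> ennreal (\<integral>x. g x \<partial>M)"
    by (rule tendsto_ennrealI)
  from LIMSEQ_unique[OF LIMSEQ_SUP[OF inc] this] show ?thesis .
qed

lemma AE_eq_of_le_nn:
  fixes h k :: "'a \<Rightarrow> ennreal"
  assumes [measurable]: "h \<in> borel_measurable M" "k \<in> borel_measurable M"
    and le: "AE x in M. h x \<le> k x" and eq: "(\<integral>\<^sup>+x. h x \<partial>M) = (\<integral>\<^sup>+x. k x \<partial>M)"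
    and fin: "(\<integral>\<^sup>+x. k x \<partial>M) \<noteq> \<infinity>"
  shows "AE x in M. h x = k x"
proof -
  have "(\<integral>\<^sup>+x. k x - h x \<partial>M) = (\<integral>\<^sup>+x. k x \<partial>M) - (\<integral>\<^sup>+x. h x \<partial>M)"
    by (rule nn_integral_diff) (use le eq fin in auto)
  also have "\<dots> = 0" using eq fin by simp
  finally have "AE x in M. k x - h x = 0"
    by (subst (asm) nn_integral_0_iff_AE) auto
  with le show ?thesis by eventually_elim (auto simp: ennreal_minus_eq_0 intro: antisym)
qed

context dpos begin

lemma nnint_add: "nnint f \<Longrightarrow> nnint g \<Longrightarrow> nnint (\<lambda>x. f x + g x)"
  by (auto simp: nnint_def)
lemma nnint_scale: "nnint f \<Longrightarrow> 0 \<le> c \<Longrightarrow> nnint (\<lambda>x. c * f x)"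
  by (auto simp: nnint_def)
lemma nnint_zero: "nnint (\<lambda>x. 0)"
  by (auto simp: nnint_def)

lemma Tp_zero: "AE x in M. Tp (\<lambda>x. 0) x = 0"
proof -
  have "AE x in M. Tp (\<lambda>x. 0) x = D (\<lambda>x. 0) x" by (rule Tp_D[OF sL_zero]) simp
  with D_zero show ?thesis by eventually_elim auto
qed

lemma Tp_add:
  assumes f: "nnint f" and g: "nnint g"
  shows "AE x in M. Tp (\<lambda>x. f x + g x) x = Tp f x + Tp g x"
proof -
  define s where "s = sq f"
  define t where "t = sq g"
  have s: "s \<in> seqs f" and t: "t \<in> seqs g" using sq_seqs f g by (auto simp: s_def t_def)
  define u where "u k = (\<lambda>x. s k x + t k x)" for k
  have u: "u \<in> seqs (\<lambda>x. f x + g x)"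
    using seqsD[OF s] seqsD[OF t] by (auto simp: seqs_def u_def intro!: sL_add tendsto_add add_mono)
  have "AE x in M. \<forall>k. D (u k) x = D (s k) x + D (t k) x"
    unfolding AE_all_countable u_def using seqsD(1)[OF s] seqsD(1)[OF t] by (auto intro: D_add)
  then have "AE x in M. Lsup u x = Lsup s x + Lsup t x"
    using D_seq_nonneg[OF s] D_seq_nonneg[OF t] D_seq_mono[OF s] D_seq_mono[OF t]
  proof eventually_elim
    case (elim x)
    have "Lsup u x = (SUP k. ennreal (D (s k) x) + ennreal (D (t k) x))"
      unfolding Lsup_def using elim by (simp add: ennreal_plus[symmetric] del: ennreal_plus)
    also have "\<dots> = Lsup s x + Lsup t x" unfolding Lsup_def
      by (rule ennreal_SUP_add) (use elim in \<open>auto intro!: incseq_SucI ennreal_leI\<close>)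
    finally show ?case .
  qed
  with Tp_eq[OF nnint_add[OF f g] u] Tp_eq[OF f s] Tp_eq[OF g t]
  show ?thesis
    by eventually_elim (metis ennreal_inj ennreal_plus Tp_nonneg add_nonneg_nonneg)
qed

lemma Tp_scale:
  assumes f: "nnint f" and c: "0 \<le> c"
  shows "AE x in M. Tp (\<lambda>x. c * f x) x = c * Tp f x"
proof -
  define s where "s = sq f"
  have s: "s \<in> seqs f" using sq_seqs f by (auto simp: s_def)
  define u where "u k = (\<lambda>x. c * s k x)" for k
  have u: "u \<in> seqs (\<lambda>x. c * f x)"
    using seqsD[OF s] c by (auto simp: seqs_def u_def intro!: sL_mult tendsto_mult mult_left_mono)
  have "AE x in M. \<forall>k. D (u k) x = c * D (s k) x"
    unfolding AE_all_countable u_def using seqsD(1)[OF s] by (auto intro: D_scale)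
  then have "AE x in M. Lsup u x = ennreal c * Lsup s x"
  proof eventually_elim
    case (elim x)
    have "Lsup u x = (SUP k. ennreal c * ennreal (D (s k) x))"
      unfolding Lsup_def using elim c by (simp add: ennreal_mult')
    also have "\<dots> = ennreal c * Lsup s x" unfolding Lsup_def
      by (rule SUP_mult_left_ennreal[symmetric])
    finally show ?case .
  qed
  with Tp_eq[OF nnint_scale[OF f c] u] Tp_eq[OF f s]
  show ?thesis
    by eventually_elim (metis c ennreal_inj ennreal_mult' Tp_nonneg mult_nonneg_nonneg)
qed

lemma Tp_cont:
  assumes f: "\<And>k. nnint (f k)" and g: "nnint g"
    and mono: "\<And>k x. x \<in> space M \<Longrightarrow> f k x \<le> f (Suc k) x"
    and lim: "\<And>x. x \<in> space M \<Longrightarrow> (\<lambda>k. f k x) \<longlonglongrightarrow> g x"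
  shows "AE x in M. (SUP k. ennreal (Tp (f k) x)) = ennreal (Tp g x)"
proof -
  have le: "f k x \<le> g x" if "x \<in> space M" for k x
    using incseq_le[OF incseq_SucI[of "\<lambda>k. f k x", OF mono[OF that]] lim[OF that]] by simp
  have m[measurable]: "Tp (f k) \<in> borel_measurable M" for k using f by simp
  have "AE x in M. \<forall>k. Tp (f k) x \<le> Tp g x"
    unfolding AE_all_countable using le by (auto intro!: Tp_mono f g)
  then have le2: "AE x in M. (SUP k. ennreal (Tp (f k) x)) \<le> ennreal (Tp g x)"
    by eventually_elim (auto intro!: SUP_least ennreal_leI)
  have "(\<integral>\<^sup>+x. (SUP k. ennreal (Tp (f k) x)) \<partial>M) = (SUP k. \<integral>\<^sup>+x. ennreal (Tp (f k) x) \<partial>M)"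
  proof (rule nn_integral_monotone_convergence_SUP_AE)
    show "AE x in M. ennreal (Tp (f i) x) \<le> ennreal (Tp (f (Suc i)) x)" for i
      using Tp_mono[OF f f, of i "Suc i"] mono by (auto elim!: eventually_mono intro: ennreal_leI)
  qed simp
  also have "\<dots> = (SUP k. ennreal (\<integral>x. f k x \<partial>M))"
    using nn_integral_eq_integral[OF Tp_int(1)[OF f]] Tp_int(2)[OF f] by (simp add: Tp_nonneg)
  also have "\<dots> = ennreal (\<integral>x. g x \<partial>M)"
    by (rule SUP_integral_incseq) (use f g mono lim in \<open>auto simp: nnint_def\<close>)
  also have "\<dots> = (\<integral>\<^sup>+x. ennreal (Tp g x) \<partial>M)"
    using nn_integral_eq_integral[OF Tp_int(1)[OF g]] Tp_int(2)[OF g] by (simp add: Tp_nonneg)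
  finally have eq: "(\<integral>\<^sup>+x. (SUP k. ennreal (Tp (f k) x)) \<partial>M) = (\<integral>\<^sup>+x. ennreal (Tp g x) \<partial>M)" .
  have "(\<integral>\<^sup>+x. ennreal (Tp g x) \<partial>M) \<noteq> \<infinity>"
    using nn_integral_eq_integral[OF Tp_int(1)[OF g]] by (simp add: Tp_nonneg)
  with eq show ?thesis
    by (intro AE_eq_of_le_nn le2) (use g in simp_all)
qed

end

definition pp :: "('a \<Rightarrow> real) \<Rightarrow> 'a \<Rightarrow> real" where "pp f = (\<lambda>x. max (f x) 0)"
definition nn :: "('a \<Rightarrow> real) \<Rightarrow> 'a \<Rightarrow> real" where "nn f = (\<lambda>x. max (- f x) 0)"

lemma pp_nn_split: "f = (\<lambda>x. pp f x + (-1) * nn f x)"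
  by (auto simp: pp_def nn_def fun_eq_iff)

lemma pp_nn_diff: "f x = pp f x - nn f x"
  by (auto simp: pp_def nn_def)

lemma pp_nonneg: "0 \<le> pp f x" and nn_nonneg: "0 \<le> nn f x"
  by (auto simp: pp_def nn_def)

lemma pp_meas[measurable]: "f \<in> borel_measurable M \<Longrightarrow> pp f \<in> borel_measurable M"
  and nn_meas[measurable]: "f \<in> borel_measurable M \<Longrightarrow> nn f \<in> borel_measurable M"
  by (auto simp: pp_def nn_def)

lemma pp_int: "integrable M f \<Longrightarrow> integrable M (pp f)"
  and nn_int: "integrable M f \<Longrightarrow> integrable M (nn f)"
  by (auto simp: pp_def nn_def)

context dpos begin

lemma nnint_pp: "integrable M f \<Longrightarrow> nnint (pp f)"
  and nnint_nn: "integrable M f \<Longrightarrow> nnint (nn f)"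
  by (auto simp: nnint_def pp_int nn_int pp_nonneg nn_nonneg)

definition T :: "('a \<Rightarrow> real) \<Rightarrow> 'a \<Rightarrow> real" where
  "T f x = Tp (pp f) x - Tp (nn f) x"

lemma T_L1: "integrable M f \<Longrightarrow> integrable M (T f)"
  unfolding T_def[abs_def] by (intro Bochner_Integration.integrable_diff Tp_int nnint_pp nnint_nn)

lemma T_integral: "integrable M f \<Longrightarrow> (\<integral>x. T f x \<partial>M) = (\<integral>x. f x \<partial>M)"
proof -
  assume f: "integrable M f"
  have "(\<integral>x. T f x \<partial>M) = (\<integral>x. Tp (pp f) x \<partial>M) - (\<integral>x. Tp (nn f) x \<partial>M)"
    unfolding T_def by (intro Bochner_Integration.integral_diff Tp_int nnint_pp nnint_nn f)
  also have "\<dots> = (\<integral>x. pp f x \<partial>M) - (\<integral>x. nn f x \<partial>M)"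
    using Tp_int(2)[OF nnint_pp[OF f]] Tp_int(2)[OF nnint_nn[OF f]] by simp
  also have "\<dots> = (\<integral>x. pp f x - nn f x \<partial>M)"
    by (intro Bochner_Integration.integral_diff[symmetric] pp_int nn_int f)
  also have "\<dots> = (\<integral>x. f x \<partial>M)" by (simp add: pp_nn_diff[symmetric])
  finally show ?thesis .
qed

lemma T_cong:
  assumes f: "integrable M f" and g: "integrable M g" and eq: "AE x in M. f x = g x"
  shows "AE x in M. T f x = T g x"
proof -
  have "AE x in M. pp f x = pp g x" "AE x in M. nn f x = nn g x"
    using eq by (auto simp: pp_def nn_def elim!: eventually_mono)
  from Tp_cong[OF nnint_pp[OF f] nnint_pp[OF g] this(1)] Tp_cong[OF nnint_nn[OF f] nnint_nn[OF g] this(2)]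
  show ?thesis by eventually_elim (simp add: T_def)
qed

lemma T_add:
  assumes f: "integrable M f" and g: "integrable M g"
  shows "AE x in M. T (\<lambda>y. f y + g y) x = T f x + T g x"
proof -
  define h where "h = (\<lambda>y. f y + g y)"
  have h: "integrable M h" using f g by (simp add: h_def)
  have eqf: "(\<lambda>x. pp h x + (\<lambda>x. nn f x + nn g x) x) = (\<lambda>x. nn h x + (\<lambda>x. pp f x + pp g x) x)"
    by (auto simp: pp_def nn_def h_def fun_eq_iff)
  have a1: "AE x in M. Tp (\<lambda>x. pp h x + (\<lambda>x. nn f x + nn g x) x) x = Tp (pp h) x + Tp (\<lambda>x. nn f x + nn g x) x"
    by (intro Tp_add nnint_pp nnint_nn nnint_add h f g)
  have a2: "AE x in M. Tp (\<lambda>x. nn f x + nn g x) x = Tp (nn f) x + Tp (nn g) x"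
    by (intro Tp_add nnint_nn f g)
  have a3: "AE x in M. Tp (\<lambda>x. nn h x + (\<lambda>x. pp f x + pp g x) x) x = Tp (nn h) x + Tp (\<lambda>x. pp f x + pp g x) x"
    by (intro Tp_add nnint_pp nnint_nn nnint_add h f g)
  have a4: "AE x in M. Tp (\<lambda>x. pp f x + pp g x) x = Tp (pp f) x + Tp (pp g) x"
    by (intro Tp_add nnint_pp f g)
  from a1 a2 a3 a4 show ?thesis unfolding h_def[symmetric]
    by eventually_elim (simp add: T_def eqf)
qed

lemma T_scale:
  assumes f: "integrable M f"
  shows "AE x in M. T (\<lambda>y. c * f y) x = c * T f x"
proof (cases "0 \<le> c")
  case True
  have e1: "pp (\<lambda>y. c * f y) = (\<lambda>x. c * pp f x)" "nn (\<lambda>y. c * f y) = (\<lambda>x. c * nn f x)"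
    using True by (auto simp: pp_def nn_def fun_eq_iff max_mult_distrib_left)
  from Tp_scale[OF nnint_pp[OF f] True] Tp_scale[OF nnint_nn[OF f] True]
  show ?thesis by eventually_elim (simp add: T_def e1 algebra_simps)
next
  case False
  then have c: "0 \<le> - c" by simp
  have e1: "pp (\<lambda>y. c * f y) = (\<lambda>x. (- c) * nn f x)" "nn (\<lambda>y. c * f y) = (\<lambda>x. (- c) * pp f x)"
    using False by (auto simp: pp_def nn_def fun_eq_iff max_def mult_le_0_iff zero_le_mult_iff)
  from Tp_scale[OF nnint_pp[OF f] c] Tp_scale[OF nnint_nn[OF f] c]
  show ?thesis by eventually_elim (simp add: T_def e1 algebra_simps)
qed

lemma T_pos:
  assumes f: "integrable M f" and nn0: "AE x in M. 0 \<le> f x"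
  shows "AE x in M. 0 \<le> T f x"
proof -
  have "AE x in M. nn f x = 0" using nn0 by (auto simp: nn_def elim!: eventually_mono)
  from Tp_cong[OF nnint_nn[OF f] nnint_zero this] Tp_zero
  show ?thesis by eventually_elim (simp add: T_def Tp_nonneg)
qed

lemma T_markov: "markov_operator M T"
  unfolding markov_operator_def l1_operator_def
  using T_L1 T_cong T_add T_scale T_pos T_integral by blast

lemma T_ext:
  assumes f: "f \<in> simple_L1 M"
  shows "AE x in M. T f x = D f x"
proof -
  have pf: "pp f \<in> simple_L1 M" and nf: "nn f \<in> simple_L1 M"
    using sL_pos[OF f] sL_neg[OF f] by (simp_all add: pp_def nn_def)
  have e: "(\<lambda>x. pp f x - nn f x) = f" by (auto simp: pp_nn_diff[symmetric])
  from Tp_D[OF pf pp_nonneg] Tp_D[OF nf nn_nonneg] D_diff[OF pf nf]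
  show ?thesis by eventually_elim (simp add: T_def e)
qed

lemma markov_mono:
  assumes T1: "markov_operator M T1" and a: "integrable M a" and b: "integrable M b"
    and le: "AE x in M. a x \<le> b x"
  shows "AE x in M. T1 a x \<le> T1 b x"
proof -
  have l1: "l1_operator M T1" using T1 by (simp add: markov_operator_def)
  have d: "integrable M (\<lambda>x. b x - a x)" using a b by simp
  have "AE x in M. 0 \<le> T1 (\<lambda>x. b x - a x) x"
    using T1 d le unfolding markov_operator_def by (auto elim!: eventually_mono)
  moreover have "AE x in M. T1 (\<lambda>y. a y + (b y - a y)) x = T1 a x + T1 (\<lambda>x. b x - a x) x"
    using l1 a d unfolding l1_operator_def by blast
  ultimately show ?thesis by eventually_elim simp
qed

lemma markov_unique:
  assumes T1: "markov_operator M T1" and ext: "\<forall>f\<in>simple_L1 M. AE x in M. T1 f x = D f x"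
    and f: "integrable M f"
  shows "AE x in M. T1 f x = T f x"
proof -
  have l1: "l1_operator M T1" using T1 by (simp add: markov_operator_def)
  have nnc: "AE x in M. T1 F x = Tp F x" if F: "nnint F" for F
  proof -
    define s where "s = sq F"
    have s: "s \<in> seqs F" using sq_seqs[OF F] by (simp add: s_def)
    have FI: "integrable M F" using F by (simp add: nnint_def)
    have "AE x in M. \<forall>k. D (s k) x \<le> T1 F x"
      unfolding AE_all_countable
    proof
      fix k
      have sk: "s k \<in> simple_L1 M" using seqsD(1)[OF s] .
      have "AE x in M. T1 (s k) x \<le> T1 F x"
        by (rule markov_mono[OF T1 _ FI]) (use sk seqs_le[OF s] in \<open>auto simp: simple_L1_def\<close>)
      with ext sk show "AE x in M. D (s k) x \<le> T1 F x" by (auto elim: AE_mp)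
    qed
    then have "AE x in M. Lsup s x \<le> ennreal (T1 F x)"
      by eventually_elim (auto simp: Lsup_def intro!: SUP_least ennreal_leI)
    moreover have "AE x in M. 0 \<le> T1 F x"
      using T1 FI F unfolding markov_operator_def nnint_def by auto
    moreover note Tp_eq[OF F s]
    ultimately have le: "AE x in M. Tp F x \<le> T1 F x"
    proof eventually_elim
      case (elim x)
      then have "ennreal (Tp F x) \<le> ennreal (T1 F x)" by simp
      then show ?case using elim(2) by (simp add: ennreal_le_iff)
    qed
    have i1: "integrable M (T1 F)" using l1 FI by (simp add: l1_operator_def)
    have "(\<integral>x. T1 F x - Tp F x \<partial>M) = 0"
      using T1 FI Tp_int[OF F] i1 by (simp add: markov_operator_def)
    then have "AE x in M. T1 F x - Tp F x = 0"
      by (subst (asm) integral_nonneg_eq_0_iff_AE) (use i1 Tp_int(1)[OF F] le in \<open>auto elim!: eventually_mono\<close>)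
    then show ?thesis by (auto elim!: eventually_mono)
  qed
  have pi: "integrable M (pp f)" "integrable M (\<lambda>y. (-1) * nn f y)" using f by (auto intro: pp_int nn_int)
  have "AE x in M. T1 (\<lambda>y. pp f y + (\<lambda>y. (-1) * nn f y) y) x = T1 (pp f) x + T1 (\<lambda>y. (-1) * nn f y) x"
    using l1 pi unfolding l1_operator_def by blast
  then have "AE x in M. T1 f x = T1 (pp f) x + T1 (\<lambda>y. (-1) * nn f y) x"
    unfolding pp_nn_split[of f, symmetric] .
  moreover have "AE x in M. T1 (\<lambda>y. (-1) * nn f y) x = (-1) * T1 (nn f) x"
    using l1 nn_int[OF f] unfolding l1_operator_def by blast
  moreover note nnc[OF nnint_pp[OF f]] nnc[OF nnint_nn[OF f]]
  ultimately show ?thesis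
    by eventually_elim (simp add: T_def)
qed

end

context dsetup begin

lemma AE_le_sets:
  fixes h k :: "'a \<Rightarrow> ennreal"
  assumes [measurable]: "h \<in> borel_measurable M" "k \<in> borel_measurable M"
    and fin: "AE x in M. k x < \<infinity>"
    and le: "\<And>E. E \<in> sets M \<Longrightarrow> emeasure M E < \<infinity> \<Longrightarrow>
       (\<integral>\<^sup>+x. h x * indicator E x \<partial>M) \<le> (\<integral>\<^sup>+x. k x * indicator E x \<partial>M)"
  shows "AE x in M. h x \<le> k x"
proof -
  define E where "E n m = {x\<in>space M. k x < h x} \<inter> A n \<inter> {x\<in>space M. k x \<le> of_nat m}" for n m :: nat
  have Es[measurable]: "E n m \<in> sets M" for n m using A_sets[of n] unfolding E_def by measurable
  have Efin: "emeasure M (E n m) < \<infinity>" for n m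
  proof -
    have "E n m \<subseteq> A n" by (auto simp: E_def)
    from emeasure_mono[OF this A_sets] A_fin[of n] show ?thesis by (rule le_less_trans)
  qed
  have notin: "AE x in M. x \<notin> E n m" for n m
  proof -
    have kfin: "(\<integral>\<^sup>+x. k x * indicator (E n m) x \<partial>M) \<noteq> \<infinity>"
    proof -
      have "(\<integral>\<^sup>+x. k x * indicator (E n m) x \<partial>M) \<le> (\<integral>\<^sup>+x. of_nat m * indicator (E n m) x \<partial>M)"
        by (intro nn_integral_mono) (auto simp: E_def split: split_indicator)
      also have "\<dots> = of_nat m * emeasure M (E n m)" by (simp add: nn_integral_cmult_indicator)
      also have "\<dots> < \<infinity>" using Efin[of n m] by (simp add: ennreal_mult_less_top of_nat_less_top)
      finally show ?thesis by simp
    qed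
    have "AE x in M. h x * indicator (E n m) x \<le> k x * indicator (E n m) x"
    proof (rule ccontr)
      assume nle: "\<not> ?thesis"
      have m1: "(\<lambda>x. k x * indicator (E n m) x) \<in> borel_measurable M" by measurable
      have m2: "(\<lambda>x. h x * indicator (E n m) x) \<in> borel_measurable M" by measurable
      have "AE x in M. k x * indicator (E n m) x \<le> h x * indicator (E n m) x"
        by (intro AE_I2) (auto simp: E_def split: split_indicator)
      with nle have "(\<integral>\<^sup>+x. k x * indicator (E n m) x \<partial>M) < (\<integral>\<^sup>+x. h x * indicator (E n m) x \<partial>M)"
        by (intro nn_integral_less kfin m1 m2) auto
      with le[OF Es[of n m] Efin[of n m]] show False by simp
    qed
    then show ?thesis
      by eventually_elim (auto simp: E_def split: split_indicator)
  qed
  then have "AE x in M. \<forall>n m. x \<notin> E n m" by (simp add: AE_all_countable)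
  with fin AE_space show ?thesis
  proof (eventually_elim)
    case (elim x)
    show ?case
    proof (rule ccontr)
      assume "\<not> h x \<le> k x"
      then have kh: "k x < h x" by simp
      have xs: "x \<in> space M" using elim by simp
      then obtain n where n: "x \<in> A n" using A_cover by auto
      obtain m where m: "k x \<le> of_nat m"
        using ennreal_Ex_less_of_nat[of "k x"] elim(1) by (auto simp: infinity_ennreal_def dest: less_imp_le)
      have "x \<in> E n m" using xs n m kh by (simp add: E_def)
      with elim show False by blast
    qed
  qed
qed

end

context dpos begin

definition w :: "'a \<Rightarrow> real" where
  "w = (\<lambda>x. enn2real ((SOME h. h \<in> borel_measurable M \<and> integral\<^sup>N M h \<noteq> \<infinity> \<and>
                          (\<forall>x\<in>space M. 0 < h x \<and> h x < \<infinity>)) x))"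

lemma w_props: "w \<in> borel_measurable M" "integrable M w" "\<And>x. x \<in> space M \<Longrightarrow> 0 < w x" "\<And>x. 0 \<le> w x"
proof -
  define P where "P h \<longleftrightarrow> h \<in> borel_measurable M \<and> integral\<^sup>N M h \<noteq> \<infinity> \<and> (\<forall>x\<in>space M. 0 < h x \<and> h x < \<infinity>)"
    for h :: "'a \<Rightarrow> ennreal"
  have "\<exists>h. P h" using sigma_finite_measure.Ex_finite_integrable_function[OF sf] by (auto simp: P_def)
  then have hP: "P (SOME h. P h)" by (rule someI_ex)
  define h where "h = (SOME h. P h)"
  have w: "w = (\<lambda>x. enn2real (h x))" unfolding w_def h_def P_def ..
  have h: "h \<in> borel_measurable M" "integral\<^sup>N M h \<noteq> \<infinity>" "\<And>x. x \<in> space M \<Longrightarrow> 0 < h x \<and> h x < \<infinity>"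
    using hP by (auto simp: P_def h_def)
  show wm: "w \<in> borel_measurable M" unfolding w using h(1) by measurable
  have hfin: "h x \<noteq> top" if "x \<in> space M" for x using h(3)[OF that] by (auto simp: infinity_ennreal_def)
  have "(\<integral>\<^sup>+x. ennreal (w x) \<partial>M) = (\<integral>\<^sup>+x. h x \<partial>M)"
    by (rule nn_integral_cong) (use hfin in \<open>auto simp: w ennreal_enn2real_if\<close>)
  then show "integrable M w" using h(2) wm by (intro integrableI_nonneg) (auto simp: w less_top)
  show "\<And>x. x \<in> space M \<Longrightarrow> 0 < w x"
  proof -
    fix x assume "x \<in> space M"
    then show "0 < w x" using h(3)[of x] by (auto simp: w enn2real_positive_iff)
  qed
  show "\<And>x. 0 \<le> w x" by (simp add: w)
qed

lemma w_meas[measurable]: "w \<in> borel_measurable M" using w_props(1) .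

lemma nnint_w_ind: "E \<in> sets M \<Longrightarrow> nnint (\<lambda>x. w x * indicator E x)"
  using w_props by (auto simp: nnint_def intro!: integrable_real_mult_indicator)

definition nu :: "('a \<Rightarrow> real) \<Rightarrow> 'a set \<Rightarrow> ennreal" where
  "nu g E = (\<integral>\<^sup>+x. ennreal (g x) * ennreal (Tp (\<lambda>y. w y * indicator E y) x) \<partial>M)"

definition Nm :: "('a \<Rightarrow> real) \<Rightarrow> 'a measure" where
  "Nm g = measure_of (space M) (sets M) (nu g)"

lemma Tp_wind_meas[measurable]: "E \<in> sets M \<Longrightarrow> Tp (\<lambda>y. w y * indicator E y) \<in> borel_measurable M"
  using nnint_w_ind by simp

lemma Tp_w_sum:
  fixes E :: "nat \<Rightarrow> 'a set"
  assumes E: "range E \<subseteq> sets M" "disjoint_family E"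
  shows "AE x in M. \<forall>n. Tp (\<lambda>y. w y * indicator (\<Union>i<n. E i) y) x = (\<Sum>i<n. Tp (\<lambda>y. w y * indicator (E i) y) x)"
  unfolding AE_all_countable
proof
  fix n :: nat show "AE x in M. Tp (\<lambda>y. w y * indicator (\<Union>i<n. E i) y) x = (\<Sum>i<n. Tp (\<lambda>y. w y * indicator (E i) y) x)"
  proof (induction n)
    case 0
    then show ?case using Tp_zero by simp
  next
    case (Suc n)
    have U: "(\<Union>i<n. E i) \<in> sets M" using E by auto
    have dis: "(\<Union>i<n. E i) \<inter> E n = {}"
    proof -
      have "E i \<inter> E n = {}" if "i < n" for i using E(2) that by (auto simp: disjoint_family_on_def)
      then show ?thesis by blast
    qed
    have eq: "(\<lambda>y. w y * indicator (\<Union>i<Suc n. E i) y) =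
        (\<lambda>y. (\<lambda>y. w y * indicator (\<Union>i<n. E i) y) y + (\<lambda>y. w y * indicator (E n) y) y)"
      using dis by (auto simp: fun_eq_iff lessThan_Suc split: split_indicator)
    have "AE x in M. Tp (\<lambda>y. w y * indicator (\<Union>i<Suc n. E i) y) x =
       Tp (\<lambda>y. w y * indicator (\<Union>i<n. E i) y) x + Tp (\<lambda>y. w y * indicator (E n) y) x"
      unfolding eq by (intro Tp_add nnint_w_ind U) (use E in auto)
    with Suc show ?case by eventually_elim simp
  qed
qed

lemma nu_ca: assumes gm[measurable]: "g \<in> borel_measurable M" shows "countably_additive (sets M) (nu g)"
proof (rule countably_additiveI)
  fix E :: "nat \<Rightarrow> 'a set"
  assume E: "range E \<subseteq> sets M" "disjoint_family E" "(\<Union>i. E i) \<in> sets M"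
  have Ei[measurable]: "E i \<in> sets M" for i using E by auto
  have "(\<Sum>i. nu g (E i)) = (\<integral>\<^sup>+x. (\<Sum>i. ennreal (g x) * ennreal (Tp (\<lambda>y. w y * indicator (E i) y) x)) \<partial>M)"
    unfolding nu_def by (rule nn_integral_suminf[symmetric]) (use w_props in \<open>auto intro!: Tp_meas nnint_w_ind\<close>)
  also have "\<dots> = nu g (\<Union>i. E i)"
    unfolding nu_def
  proof (rule nn_integral_cong_AE)
    have lim: "AE x in M. (SUP n. ennreal (Tp (\<lambda>y. w y * indicator (\<Union>i<n. E i) y) x))
               = ennreal (Tp (\<lambda>y. w y * indicator (\<Union>i. E i) y) x)"
    proof (rule Tp_cont)
      show "nnint (\<lambda>y. w y * indicator (\<Union>i<n. E i) y)" for n by (intro nnint_w_ind) auto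
      show "nnint (\<lambda>y. w y * indicator (\<Union>i. E i) y)" using E(3) by (rule nnint_w_ind)
      show "w x * indicator (\<Union>i<n. E i) x \<le> w x * indicator (\<Union>i<Suc n. E i) x" for n x
        using w_props(4)[of x] by (auto simp: lessThan_Suc split: split_indicator)
      show "(\<lambda>n. w x * indicator (\<Union>i<n. E i) x) \<longlonglongrightarrow> w x * indicator (\<Union>i. E i) x" for x
      proof (cases "x \<in> (\<Union>i. E i)")
        case True
        then obtain i where "x \<in> E i" by auto
        then have "\<forall>n\<ge>Suc i. w x * indicator (\<Union>i<n. E i) x = w x * indicator (\<Union>i. E i) x"
          by (auto split: split_indicator)
        then show ?thesis by (intro tendsto_eventually) (auto simp: eventually_sequentially)
      next
        case False
        then show ?thesis by (auto split: split_indicator)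
      qed
    qed
    from lim Tp_w_sum[OF E(1,2)]
    show "AE x in M. (\<Sum>i. ennreal (g x) * ennreal (Tp (\<lambda>y. w y * indicator (E i) y) x)) =
        ennreal (g x) * ennreal (Tp (\<lambda>y. w y * indicator (\<Union>i. E i) y) x)"
    proof eventually_elim
      case (elim x)
      have "(\<Sum>i. ennreal (Tp (\<lambda>y. w y * indicator (E i) y) x))
          = (SUP n. \<Sum>i<n. ennreal (Tp (\<lambda>y. w y * indicator (E i) y) x))"
        by (rule suminf_eq_SUP)
      also have "\<dots> = (SUP n. ennreal (Tp (\<lambda>y. w y * indicator (\<Union>i<n. E i) y) x))"
        using elim(2) by (simp add: Tp_nonneg)
      also have "\<dots> = ennreal (Tp (\<lambda>y. w y * indicator (\<Union>i. E i) y) x)" using elim(1) .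
      finally show ?case by simp
    qed
  qed
  finally show "(\<Sum>i. nu g (E i)) = nu g (\<Union>i. E i)" .
qed

lemma nu_empty: "nu g {} = 0"
proof -
  have "AE x in M. Tp (\<lambda>y. w y * indicator {} y) x = 0" using Tp_zero by simp
  then have "nu g {} = (\<integral>\<^sup>+x. 0 \<partial>M)" unfolding nu_def
    by (intro nn_integral_cong_AE) (auto elim!: eventually_mono)
  then show ?thesis by simp
qed

lemma emeasure_Nm: "g \<in> borel_measurable M \<Longrightarrow> E \<in> sets M \<Longrightarrow> emeasure (Nm g) E = nu g E"
  unfolding Nm_def
  by (rule emeasure_measure_of_sigma) (auto simp: positive_def nu_empty nu_ca sets.sigma_algebra_axioms)

lemma sets_Nm: "sets (Nm g) = sets M"
  unfolding Nm_def by (simp add: sets.space_closed)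

lemma Nm_ac: assumes gm: "g \<in> borel_measurable M" shows "absolutely_continuous M (Nm g)"
  unfolding absolutely_continuous_def
proof
  fix E assume E: "E \<in> null_sets M"
  then have Es: "E \<in> sets M" by auto
  have "AE x in M. x \<notin> E" using E by (rule AE_not_in)
  then have "AE x in M. w x * indicator E x = 0" by (auto elim!: eventually_mono)
  from Tp_cong[OF nnint_w_ind[OF Es] nnint_zero this] Tp_zero
  have "AE x in M. Tp (\<lambda>y. w y * indicator E y) x = 0" by eventually_elim simp
  then have "nu g E = (\<integral>\<^sup>+x. 0 \<partial>M)" unfolding nu_def
    by (intro nn_integral_cong_AE) (auto elim!: eventually_mono)
  then show "E \<in> null_sets (Nm g)" using Es gm by (simp add: null_sets_def sets_Nm emeasure_Nm)
qed

definition RN :: "('a \<Rightarrow> real) \<Rightarrow> 'a \<Rightarrow> ennreal" where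
  "RN g = RN_deriv M (Nm g)"

lemma RN_meas[measurable]: "RN g \<in> borel_measurable M"
  by (simp add: RN_def)

lemma RN_set: assumes gm: "g \<in> borel_measurable M" and E: "E \<in> sets M"
  shows "(\<integral>\<^sup>+x. RN g x * indicator E x \<partial>M) = nu g E"
proof -
  have "density M (RN g) = Nm g"
    unfolding RN_def by (rule sigma_finite_measure.density_RN_deriv[OF sf Nm_ac[OF gm] sets_Nm])
  then have "emeasure (density M (RN g)) E = emeasure (Nm g) E" by simp
  then show ?thesis using E gm by (simp add: emeasure_density emeasure_Nm)
qed

end

context dpos begin

definition Sp :: "('a \<Rightarrow> real) \<Rightarrow> 'a \<Rightarrow> real" where
  "Sp g x = enn2real (RN g x) / w x"

lemma Sp_meas[measurable]: "Sp g \<in> borel_measurable M"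
  unfolding Sp_def[abs_def] by measurable

lemma Sp_nonneg: "0 \<le> Sp g x"
  unfolding Sp_def using w_props(4)[of x] by simp

lemma Tp_wind_int: "E \<in> sets M \<Longrightarrow> (\<integral>\<^sup>+x. ennreal (Tp (\<lambda>y. w y * indicator E y) x) \<partial>M) = (\<integral>\<^sup>+x. ennreal (w x * indicator E x) \<partial>M)"
proof -
  assume E: "E \<in> sets M"
  have n: "nnint (\<lambda>y. w y * indicator E y)" using nnint_w_ind[OF E] .
  have "(\<integral>\<^sup>+x. ennreal (Tp (\<lambda>y. w y * indicator E y) x) \<partial>M) = ennreal (\<integral>x. w x * indicator E x \<partial>M)"
    using nn_integral_eq_integral[OF Tp_int(1)[OF n]] Tp_int(2)[OF n] by (simp add: Tp_nonneg)
  also have "\<dots> = (\<integral>\<^sup>+x. ennreal (w x * indicator E x) \<partial>M)"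
    using nn_integral_eq_integral[of M "\<lambda>x. w x * indicator E x"] n by (auto simp: nnint_def)
  finally show ?thesis .
qed

lemma RN_bound:
  assumes gm[measurable]: "g \<in> borel_measurable M" and C: "0 \<le> C" and gC: "AE x in M. g x \<le> C"
  shows "AE x in M. RN g x \<le> ennreal (C * w x)"
proof (rule AE_le_sets)
  show "AE x in M. ennreal (C * w x) < \<infinity>" by simp
  fix E assume E[measurable]: "E \<in> sets M" "emeasure M E < \<infinity>"
  have "(\<integral>\<^sup>+x. RN g x * indicator E x \<partial>M) = nu g E" using RN_set[OF gm E(1)] .
  also have "\<dots> \<le> (\<integral>\<^sup>+x. ennreal C * ennreal (Tp (\<lambda>y. w y * indicator E y) x) \<partial>M)"
    unfolding nu_def using gC by (intro nn_integral_mono_AE) (auto elim!: eventually_mono intro!: mult_right_mono ennreal_leI)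
  also have "\<dots> = ennreal C * (\<integral>\<^sup>+x. ennreal (w x * indicator E x) \<partial>M)"
    using Tp_wind_int[OF E(1)] by (simp add: nn_integral_cmult nnint_w_ind)
  also have "\<dots> = (\<integral>\<^sup>+x. ennreal C * ennreal (w x * indicator E x) \<partial>M)"
    by (rule nn_integral_cmult[symmetric]) measurable
  also have "\<dots> = (\<integral>\<^sup>+x. ennreal (C * w x) * indicator E x \<partial>M)"
    using C w_props(4) by (intro nn_integral_cong) (auto split: split_indicator simp: ennreal_mult)
  finally show "(\<integral>\<^sup>+x. RN g x * indicator E x \<partial>M) \<le> (\<integral>\<^sup>+x. ennreal (C * w x) * indicator E x \<partial>M)" .
qed simp_all

lemma Sp_bound:
  assumes gm: "g \<in> borel_measurable M" and C: "0 \<le> C" and gC: "AE x in M. g x \<le> C"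
  shows "AE x in M. Sp g x \<le> C"
  using RN_bound[OF assms] AE_space
proof eventually_elim
  case (elim x)
  then have w: "0 < w x" using w_props(3) by simp
  have "enn2real (RN g x) \<le> C * w x"
    using elim(1) C w by (intro enn2real_leI) auto
  then show ?case using w by (simp add: Sp_def divide_le_eq)
qed

lemma Sp_RN:
  assumes gm: "g \<in> borel_measurable M" and C: "0 \<le> C" and gC: "AE x in M. g x \<le> C"
  shows "AE x in M. ennreal (Sp g x) * ennreal (w x) = RN g x"
  using RN_bound[OF assms] AE_space
proof eventually_elim
  case (elim x)
  then have w: "0 < w x" using w_props(3) by simp
  have fin: "RN g x < top" using elim(1) by (simp add: le_less_trans)
  have "ennreal (Sp g x) * ennreal (w x) = ennreal (Sp g x * w x)"
    using Sp_nonneg by (simp add: ennreal_mult')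
  also have "Sp g x * w x = enn2real (RN g x)" using w by (simp add: Sp_def)
  finally show ?case using fin by (simp add: ennreal_enn2real)
qed

end

context dpos begin

lemma nnint_w_mult: "\<lbrakk>u \<in> borel_measurable M; \<And>x. 0 \<le> u x; integrable M (\<lambda>x. w x * u x)\<rbrakk> \<Longrightarrow> nnint (\<lambda>x. w x * u x)"
  using w_props(4) by (auto simp: nnint_def)

lemma int_w_le:
  assumes "integrable M (\<lambda>x. w x * v x)" "u \<in> borel_measurable M" "\<And>x. 0 \<le> u x" "\<And>x. x \<in> space M \<Longrightarrow> u x \<le> v x"
  shows "integrable M (\<lambda>x. w x * u x)"
proof (rule Bochner_Integration.integrable_bound[OF assms(1)])
  show "(\<lambda>x. w x * u x) \<in> borel_measurable M" using assms(2) by measurable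
  show "AE x in M. norm (w x * u x) \<le> norm (w x * v x)"
    using assms(3,4) w_props(4) by (intro AE_I2) (auto simp: abs_mult intro!: mult_left_mono order_trans[OF _ abs_ge_self])
qed

lemma adj_phi:
  assumes gm[measurable]: "g \<in> borel_measurable M"
    and u[measurable]: "u \<in> borel_measurable M" and un: "\<And>x. 0 \<le> u x"
  shows "integrable M (\<lambda>x. w x * u x) \<longrightarrow>
    (\<integral>\<^sup>+x. RN g x * ennreal (u x) \<partial>M) = (\<integral>\<^sup>+x. ennreal (g x) * ennreal (Tp (\<lambda>y. w y * u y) x) \<partial>M)"
  using u un
proof (induction u rule: borel_measurable_induct_real)
  case (set A)
  then show ?case using RN_set[OF gm set] by (simp add: nu_def ennreal_indicator)
next
  case (mult u c)
  show ?case
  proof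
    assume i: "integrable M (\<lambda>x. w x * (c * u x))"
    show "(\<integral>\<^sup>+x. RN g x * ennreal (c * u x) \<partial>M) = (\<integral>\<^sup>+x. ennreal (g x) * ennreal (Tp (\<lambda>y. w y * (c * u y)) x) \<partial>M)"
    proof (cases "c = 0")
      case True
      have "AE x in M. Tp (\<lambda>y. w y * (c * u y)) x = 0" using Tp_zero True by simp
      then have "(\<integral>\<^sup>+x. ennreal (g x) * ennreal (Tp (\<lambda>y. w y * (c * u y)) x) \<partial>M) = (\<integral>\<^sup>+x. 0 \<partial>M)"
        by (intro nn_integral_cong_AE) (auto elim!: eventually_mono)
      then show ?thesis using True by simp
    next
      case False
      then have c: "0 < c" using mult by simp
      have iu: "integrable M (\<lambda>x. w x * u x)"
      proof -
        have "integrable M (\<lambda>x. (1/c) * (w x * (c * u x)))" using i by (rule integrable_mult_right)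
        moreover have "(\<lambda>x. (1/c) * (w x * (c * u x))) = (\<lambda>x. w x * u x)" using c by (auto simp: fun_eq_iff)
        ultimately show ?thesis by simp
      qed
      have IH: "(\<integral>\<^sup>+x. RN g x * ennreal (u x) \<partial>M) = (\<integral>\<^sup>+x. ennreal (g x) * ennreal (Tp (\<lambda>y. w y * u y) x) \<partial>M)"
        using mult iu by simp
      have e: "(\<lambda>y. w y * (c * u y)) = (\<lambda>y. c * (w y * u y))" by (auto simp: fun_eq_iff)
      have nI: "nnint (\<lambda>y. w y * u y)" using nnint_w_mult[OF mult(2) mult(3) iu] .
      have um[measurable]: "u \<in> borel_measurable M" using mult(2) .
      have "(\<integral>\<^sup>+x. RN g x * ennreal (c * u x) \<partial>M) = (\<integral>\<^sup>+x. ennreal c * (RN g x * ennreal (u x)) \<partial>M)"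
        using c mult(3) by (intro nn_integral_cong) (simp add: ennreal_mult mult.left_commute)
      also have "\<dots> = ennreal c * (\<integral>\<^sup>+x. RN g x * ennreal (u x) \<partial>M)"
        by (rule nn_integral_cmult) measurable
      also have "\<dots> = ennreal c * (\<integral>\<^sup>+x. ennreal (g x) * ennreal (Tp (\<lambda>y. w y * u y) x) \<partial>M)" using IH by simp
      also have "\<dots> = (\<integral>\<^sup>+x. ennreal c * (ennreal (g x) * ennreal (Tp (\<lambda>y. w y * u y) x)) \<partial>M)"
        by (rule nn_integral_cmult[symmetric]) (use nI in measurable)
      also have "\<dots> = (\<integral>\<^sup>+x. ennreal (g x) * ennreal (Tp (\<lambda>y. w y * (c * u y)) x) \<partial>M)"
        unfolding e using Tp_scale[OF nI, of c] c
        by (intro nn_integral_cong_AE) (auto elim!: eventually_mono simp: ennreal_mult Tp_nonneg mult.left_commute)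
      finally show ?thesis .
    qed
  qed
next
  case (add u v)
  show ?case
  proof
    assume i: "integrable M (\<lambda>x. w x * (v x + u x))"
    have iu: "integrable M (\<lambda>x. w x * u x)" by (rule int_w_le[OF i]) (use add.hyps in auto)
    have iv: "integrable M (\<lambda>x. w x * v x)" by (rule int_w_le[OF i]) (use add.hyps in auto)
    have um[measurable]: "u \<in> borel_measurable M" and vm[measurable]: "v \<in> borel_measurable M"
      using add.hyps by auto
    have nu': "nnint (\<lambda>y. w y * u y)" using add.hyps iu by (intro nnint_w_mult) auto
    have nv': "nnint (\<lambda>y. w y * v y)" using add.hyps iv by (intro nnint_w_mult) auto
    have e: "(\<lambda>y. w y * (v y + u y)) = (\<lambda>y. w y * v y + w y * u y)" by (auto simp: fun_eq_iff algebra_simps)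
    have "(\<integral>\<^sup>+x. RN g x * ennreal (v x + u x) \<partial>M) = (\<integral>\<^sup>+x. RN g x * ennreal (v x) + RN g x * ennreal (u x) \<partial>M)"
      using add.hyps by (intro nn_integral_cong) (simp add: distrib_left)
    also have "\<dots> = (\<integral>\<^sup>+x. RN g x * ennreal (v x) \<partial>M) + (\<integral>\<^sup>+x. RN g x * ennreal (u x) \<partial>M)"
      by (rule nn_integral_add; measurable)
    also have "\<dots> = (\<integral>\<^sup>+x. ennreal (g x) * ennreal (Tp (\<lambda>y. w y * v y) x) \<partial>M) + (\<integral>\<^sup>+x. ennreal (g x) * ennreal (Tp (\<lambda>y. w y * u y) x) \<partial>M)"
      using add.IH iu iv by simp
    also have "\<dots> = (\<integral>\<^sup>+x. ennreal (g x) * ennreal (Tp (\<lambda>y. w y * v y) x) + ennreal (g x) * ennreal (Tp (\<lambda>y. w y * u y) x) \<partial>M)"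
      using nu' nv' by (intro nn_integral_add[symmetric]) simp_all
    also have "\<dots> = (\<integral>\<^sup>+x. ennreal (g x) * ennreal (Tp (\<lambda>y. w y * (v y + u y)) x) \<partial>M)"
      unfolding e using Tp_add[OF nv' nu']
      by (intro nn_integral_cong_AE) (auto elim!: eventually_mono simp: Tp_nonneg distrib_left)
    finally show "(\<integral>\<^sup>+x. RN g x * ennreal (v x + u x) \<partial>M) = (\<integral>\<^sup>+x. ennreal (g x) * ennreal (Tp (\<lambda>y. w y * (v y + u y)) x) \<partial>M)" .
  qed
next
  case (seq U)
  show ?case
  proof
    assume i: "integrable M (\<lambda>x. w x * u x)"
    have Um[measurable]: "\<And>i. U i \<in> borel_measurable M" using seq.hyps by auto
    have incx: "incseq (\<lambda>i. U i x)" for x using seq.hyps(3) by (auto simp: incseq_def le_fun_def)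
    have le: "U i x \<le> u x" if "x \<in> space M" for i x using incseq_le[OF incx seq.hyps(4)[OF that]] by simp
    have iU: "integrable M (\<lambda>x. w x * U i x)" for i by (rule int_w_le[OF i]) (use seq.hyps le in auto)
    have nUi: "nnint (\<lambda>y. w y * U i y)" for i using seq.hyps iU by (intro nnint_w_mult) auto
    have nu': "nnint (\<lambda>y. w y * u y)" using i w_props(4) u un by (auto simp: nnint_def)
    have IH: "(\<integral>\<^sup>+x. RN g x * ennreal (U i x) \<partial>M) = (\<integral>\<^sup>+x. ennreal (g x) * ennreal (Tp (\<lambda>y. w y * U i y) x) \<partial>M)" for i
      using seq.IH iU by simp
    have supU: "(SUP i. ennreal (U i x)) = ennreal (u x)" if "x \<in> space M" for x
    proof -
      have inc: "incseq (\<lambda>i. ennreal (U i x))" using incx by (auto simp: incseq_def intro: ennreal_leI)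
      from LIMSEQ_unique[OF LIMSEQ_SUP[OF inc] tendsto_ennrealI[OF seq.hyps(4)[OF that]]] show ?thesis .
    qed
    have "(\<integral>\<^sup>+x. RN g x * ennreal (u x) \<partial>M) = (\<integral>\<^sup>+x. (SUP i. RN g x * ennreal (U i x)) \<partial>M)"
      by (intro nn_integral_cong) (simp add: supU SUP_mult_left_ennreal[symmetric])
    also have "\<dots> = (SUP i. \<integral>\<^sup>+x. RN g x * ennreal (U i x) \<partial>M)"
    proof (rule nn_integral_monotone_convergence_SUP)
      show "incseq (\<lambda>i x. RN g x * ennreal (U i x))"
        using incx by (auto simp: incseq_def le_fun_def intro!: mult_left_mono ennreal_leI)
    qed measurable
    also have "\<dots> = (SUP i. \<integral>\<^sup>+x. ennreal (g x) * ennreal (Tp (\<lambda>y. w y * U i y) x) \<partial>M)" using IH by simp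
    also have "\<dots> = (\<integral>\<^sup>+x. (SUP i. ennreal (g x) * ennreal (Tp (\<lambda>y. w y * U i y) x)) \<partial>M)"
    proof (rule nn_integral_monotone_convergence_SUP_AE[symmetric])
      show "AE x in M. ennreal (g x) * ennreal (Tp (\<lambda>y. w y * U i y) x) \<le> ennreal (g x) * ennreal (Tp (\<lambda>y. w y * U (Suc i) y) x)" for i
      proof -
        have "AE x in M. Tp (\<lambda>y. w y * U i y) x \<le> Tp (\<lambda>y. w y * U (Suc i) y) x"
          by (rule Tp_mono[OF nUi nUi]) (use incx w_props(4) in \<open>auto intro!: AE_I2 mult_left_mono simp: incseq_Suc_iff\<close>)
        then show ?thesis by (auto elim!: eventually_mono intro!: mult_left_mono ennreal_leI)
      qed
    qed (use nUi in simp)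
    also have "\<dots> = (\<integral>\<^sup>+x. ennreal (g x) * ennreal (Tp (\<lambda>y. w y * u y) x) \<partial>M)"
    proof (rule nn_integral_cong_AE)
      have "AE x in M. (SUP i. ennreal (Tp (\<lambda>y. w y * U i y) x)) = ennreal (Tp (\<lambda>y. w y * u y) x)"
      proof (rule Tp_cont[OF nUi nu'])
        show "w x * U k x \<le> w x * U (Suc k) x" for k x using incx w_props(4) by (auto intro!: mult_left_mono simp: incseq_Suc_iff)
        show "(\<lambda>k. w x * U k x) \<longlonglongrightarrow> w x * u x" if "x \<in> space M" for x
          by (intro tendsto_intros seq.hyps(4)[OF that])
      qed
      then show "AE x in M. (SUP i. ennreal (g x) * ennreal (Tp (\<lambda>y. w y * U i y) x)) = ennreal (g x) * ennreal (Tp (\<lambda>y. w y * u y) x)"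
        by (auto elim!: eventually_mono simp: SUP_mult_left_ennreal[symmetric])
    qed
    finally show "(\<integral>\<^sup>+x. RN g x * ennreal (u x) \<partial>M) = (\<integral>\<^sup>+x. ennreal (g x) * ennreal (Tp (\<lambda>y. w y * u y) x) \<partial>M)" .
  qed
qed

lemma adj_nn:
  assumes gm[measurable]: "g \<in> borel_measurable M" and C: "0 \<le> C" and gC: "AE x in M. g x \<le> C"
    and f: "nnint f"
  shows "(\<integral>\<^sup>+x. ennreal (Sp g x) * ennreal (f x) \<partial>M) = (\<integral>\<^sup>+x. ennreal (g x) * ennreal (Tp f x) \<partial>M)"
proof -
  define \<phi> where "\<phi> x = pp f x / w x" for x
  have fm[measurable]: "f \<in> borel_measurable M" using f by simp
  have pm[measurable]: "\<phi> \<in> borel_measurable M" unfolding \<phi>_def[abs_def] by measurable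
  have pn: "0 \<le> \<phi> x" for x using w_props(4)[of x] pp_nonneg[of f x] by (simp add: \<phi>_def)
  have wphi: "w x * \<phi> x = f x" if "x \<in> space M" for x
    using w_props(3)[OF that] nnintD(2)[OF f that] by (simp add: \<phi>_def pp_def)
  have "integrable M (\<lambda>x. w x * \<phi> x) \<longleftrightarrow> integrable M f"
    by (rule Bochner_Integration.integrable_cong) (auto simp: wphi)
  then have iw: "integrable M (\<lambda>x. w x * \<phi> x)" using nnintD(1)[OF f] by simp
  have nw: "nnint (\<lambda>x. w x * \<phi> x)" using nnint_w_mult[OF pm pn iw] .
  have "(\<integral>\<^sup>+x. ennreal (Sp g x) * ennreal (f x) \<partial>M) = (\<integral>\<^sup>+x. RN g x * ennreal (\<phi> x) \<partial>M)"
  proof (rule nn_integral_cong_AE)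
    show "AE x in M. ennreal (Sp g x) * ennreal (f x) = RN g x * ennreal (\<phi> x)"
      using Sp_RN[OF gm C gC] AE_space
    proof eventually_elim
      case (elim x)
      have "ennreal (f x) = ennreal (w x) * ennreal (\<phi> x)"
        using wphi[OF elim(2)] w_props(4)[of x] by (simp add: ennreal_mult[symmetric] pn)
      then show ?case using elim(1) by (simp add: mult.assoc[symmetric])
    qed
  qed
  also have "\<dots> = (\<integral>\<^sup>+x. ennreal (g x) * ennreal (Tp (\<lambda>y. w y * \<phi> y) x) \<partial>M)"
    using adj_phi[OF gm pm pn] iw by simp
  also have "\<dots> = (\<integral>\<^sup>+x. ennreal (g x) * ennreal (Tp f x) \<partial>M)"
  proof (rule nn_integral_cong_AE)
    have "AE x in M. Tp (\<lambda>y. w y * \<phi> y) x = Tp f x"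
      by (rule Tp_cong[OF nw f]) (use wphi in \<open>auto intro!: AE_I2\<close>)
    then show "AE x in M. ennreal (g x) * ennreal (Tp (\<lambda>y. w y * \<phi> y) x) = ennreal (g x) * ennreal (Tp f x)"
      by (auto elim!: eventually_mono)
  qed
  finally show ?thesis .
qed

end

lemma ennreal_pp: "ennreal (pp g x) = ennreal (g x)"
  by (cases "0 \<le> g x") (auto simp: pp_def ennreal_neg)

lemma pp_neg: "pp (\<lambda>y. - g y) = nn g"
  by (simp add: pp_def nn_def)

context dpos begin

lemma nnint_ind: "E \<in> sets M \<Longrightarrow> emeasure M E < \<infinity> \<Longrightarrow> nnint (indicator E)"
  using sL_ind by (auto simp: nnint_def simple_L1_def)

lemma U_one: "AE x in M. (SUP n. ennreal (Tp (indicator (A n)) x)) = 1"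
proof -
  have nA: "nnint (indicator (A n))" for n using nnint_ind[OF A_sets A_fin] .
  have sA: "indicator (A n) \<in> simple_L1 M" for n using sL_ind[OF A_sets A_fin] .
  have Tm[measurable]: "Tp (indicator (A n)) \<in> borel_measurable M" for n using nA by simp
  have Tmono: "AE x in M. Tp (indicator (A n)) x \<le> Tp (indicator (A (Suc n))) x" for n
    by (rule Tp_mono[OF nA nA]) (use A_mono in \<open>auto intro!: AE_I2 split: split_indicator\<close>)
  have key: "(\<integral>\<^sup>+x. (SUP n. ennreal (Tp (indicator (A n)) x)) * indicator E x \<partial>M) = (\<integral>\<^sup>+x. 1 * indicator E x \<partial>M)"
    if E[measurable]: "E \<in> sets M" "emeasure M E < \<infinity>" for E
  proof -
    define a where "a n = (\<integral>x. D (indicator (A n)) x * indicator E x \<partial>M)" for n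
    have Dnn: "AE x in M. 0 \<le> D (indicator (A n)) x" for n by (rule D_pos[OF sA]) auto
    have ia: "integrable M (\<lambda>x. D (indicator (A n)) x * indicator E x)" for n
      by (rule integrable_real_mult_indicator[OF E(1) D_L1[OF sA]])
    have each: "(\<integral>\<^sup>+x. ennreal (Tp (indicator (A n)) x) * indicator E x \<partial>M) = ennreal (a n)" for n
    proof -
      have "(\<integral>\<^sup>+x. ennreal (Tp (indicator (A n)) x) * indicator E x \<partial>M) =
            (\<integral>\<^sup>+x. ennreal (D (indicator (A n)) x * indicator E x) \<partial>M)"
      proof (rule nn_integral_cong_AE)
        have "AE x in M. Tp (indicator (A n)) x = D (indicator (A n)) x" by (rule Tp_D[OF sA]) auto
        then show "AE x in M. ennreal (Tp (indicator (A n)) x) * indicator E x = ennreal (D (indicator (A n)) x * indicator E x)"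
          by (auto elim!: eventually_mono split: split_indicator)
      qed
      also have "\<dots> = ennreal (a n)" unfolding a_def
        by (rule nn_integral_eq_integral[OF ia]) (use Dnn[of n] in \<open>auto elim!: eventually_mono\<close>)
      finally show ?thesis .
    qed
    have inc: "incseq (\<lambda>n. ennreal (a n))"
    proof (rule incseq_SucI, rule ennreal_leI)
      fix n
      have "AE x in M. D (indicator (A n)) x \<le> D (indicator (A (Suc n))) x"
        by (rule D_mono[OF sA sA]) (use A_mono in \<open>auto intro!: AE_I2 split: split_indicator\<close>)
      then show "a n \<le> a (Suc n)" unfolding a_def
        by (intro integral_mono_AE ia) (auto elim!: eventually_mono split: split_indicator)
    qed
    have ae: "a = (\<lambda>n. \<integral>x. indicator E x * D (indicator (A n)) x \<partial>M)"
      unfolding a_def by (simp add: mult.commute)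
    have lim: "a \<longlonglongrightarrow> measure M E"
      unfolding ae by (rule D_lim[OF E])
    have "(\<integral>\<^sup>+x. (SUP n. ennreal (Tp (indicator (A n)) x)) * indicator E x \<partial>M)
        = (\<integral>\<^sup>+x. (SUP n. ennreal (Tp (indicator (A n)) x) * indicator E x) \<partial>M)"
      by (simp add: SUP_mult_right_ennreal)
    also have "\<dots> = (SUP n. \<integral>\<^sup>+x. ennreal (Tp (indicator (A n)) x) * indicator E x \<partial>M)"
    proof (rule nn_integral_monotone_convergence_SUP_AE)
      show "AE x in M. ennreal (Tp (indicator (A i)) x) * indicator E x \<le> ennreal (Tp (indicator (A (Suc i))) x) * indicator E x" for i
        using Tmono[of i] by (auto elim!: eventually_mono intro!: mult_right_mono ennreal_leI)
    qed simp
    also have "\<dots> = (SUP n. ennreal (a n))" using each by simp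
    also have "\<dots> = ennreal (measure M E)"
      using LIMSEQ_unique[OF LIMSEQ_SUP[OF inc] tendsto_ennrealI[OF lim]] .
    also have "\<dots> = (\<integral>\<^sup>+x. 1 * indicator E x \<partial>M)"
      using E by (simp add: emeasure_eq_ennreal_measure less_top)
    finally show ?thesis .
  qed
  have le1: "AE x in M. (SUP n. ennreal (Tp (indicator (A n)) x)) \<le> 1"
    by (rule AE_le_sets) (use key in auto)
  have ge1: "AE x in M. 1 \<le> (SUP n. ennreal (Tp (indicator (A n)) x))"
    by (rule AE_le_sets) (use key le1 in \<open>auto elim!: eventually_mono intro: le_less_trans\<close>)
  from le1 ge1 show ?thesis by eventually_elim simp
qed

lemma SUP_ind_A: "x \<in> space M \<Longrightarrow> (SUP n. ennreal (indicator (A n) x)) = 1"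
proof -
  assume x: "x \<in> space M"
  then obtain n where n: "x \<in> A n" using A_cover by auto
  have "1 \<le> (SUP n. ennreal (indicator (A n) x))"
    using n by (intro SUP_upper2[of n]) auto
  moreover have "(SUP n. ennreal (indicator (A n) x)) \<le> 1"
    by (intro SUP_least) (auto split: split_indicator)
  ultimately show ?thesis by simp
qed

lemma Sp_total:
  assumes gm[measurable]: "g \<in> borel_measurable M" and C: "0 \<le> C" and gC: "AE x in M. g x \<le> C"
  shows "(\<integral>\<^sup>+x. ennreal (Sp g x) \<partial>M) = (\<integral>\<^sup>+x. ennreal (g x) \<partial>M)"
proof -
  have nA: "nnint (indicator (A n))" for n using nnint_ind[OF A_sets A_fin] .
  have Am[measurable]: "A n \<in> sets M" for n using A_sets .
  have Tm[measurable]: "Tp (indicator (A n)) \<in> borel_measurable M" for n using nA by simp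
  have "(\<integral>\<^sup>+x. ennreal (Sp g x) \<partial>M) = (\<integral>\<^sup>+x. (SUP n. ennreal (Sp g x) * ennreal (indicator (A n) x)) \<partial>M)"
    by (intro nn_integral_cong) (simp add: SUP_mult_left_ennreal[symmetric] SUP_ind_A)
  also have "\<dots> = (SUP n. \<integral>\<^sup>+x. ennreal (Sp g x) * ennreal (indicator (A n) x) \<partial>M)"
  proof (rule nn_integral_monotone_convergence_SUP)
    show "incseq (\<lambda>n x. ennreal (Sp g x) * ennreal (indicator (A n) x))"
      using A_mono by (auto simp: incseq_Suc_iff le_fun_def split: split_indicator)
  qed measurable
  also have "\<dots> = (SUP n. \<integral>\<^sup>+x. ennreal (g x) * ennreal (Tp (indicator (A n)) x) \<partial>M)"
    using adj_nn[OF gm C gC nA] by simp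
  also have "\<dots> = (\<integral>\<^sup>+x. (SUP n. ennreal (g x) * ennreal (Tp (indicator (A n)) x)) \<partial>M)"
  proof (rule nn_integral_monotone_convergence_SUP_AE[symmetric])
    show "AE x in M. ennreal (g x) * ennreal (Tp (indicator (A i)) x) \<le> ennreal (g x) * ennreal (Tp (indicator (A (Suc i))) x)" for i
    proof -
      have "AE x in M. Tp (indicator (A i)) x \<le> Tp (indicator (A (Suc i))) x"
        by (rule Tp_mono[OF nA nA]) (use A_mono in \<open>auto intro!: AE_I2 split: split_indicator\<close>)
      then show ?thesis by (auto elim!: eventually_mono intro!: mult_left_mono ennreal_leI)
    qed
  qed measurable
  also have "\<dots> = (\<integral>\<^sup>+x. ennreal (g x) \<partial>M)"
    using U_one by (intro nn_integral_cong_AE) (auto elim!: eventually_mono simp: SUP_mult_left_ennreal[symmetric])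
  finally show ?thesis .
qed

end

lemma int_bdd_mult:
  fixes g f :: "'a \<Rightarrow> real"
  assumes gm: "g \<in> borel_measurable M" and gC: "AE x in M. \<bar>g x\<bar> \<le> C" and f: "integrable M f"
  shows "integrable M (\<lambda>x. g x * f x)"
proof (rule Bochner_Integration.integrable_bound[where f="\<lambda>x. C * f x"])
  show "integrable M (\<lambda>x. C * f x)" using f by simp
  show "(\<lambda>x. g x * f x) \<in> borel_measurable M" using gm f by measurable
  show "AE x in M. norm (g x * f x) \<le> norm (C * f x)"
    using gC
  proof eventually_elim
    case (elim x)
    then have "0 \<le> C" by linarith
    then show ?case using elim by (simp add: abs_mult mult_right_mono)
  qed
qed

lemma linf_bound: "linf M g \<Longrightarrow> \<exists>C\<ge>0. AE x in M. \<bar>g x\<bar> \<le> C"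
  unfolding linf_def
proof (elim conjE exE)
  fix C assume "AE x in M. \<bar>g x\<bar> \<le> C"
  then have "AE x in M. \<bar>g x\<bar> \<le> max C 0" by (auto elim!: eventually_mono)
  then show "\<exists>C\<ge>0. AE x in M. \<bar>g x\<bar> \<le> C" by (intro exI[of _ "max C 0"]) auto
qed

context dpos begin

definition S :: "('a \<Rightarrow> real) \<Rightarrow> 'a \<Rightarrow> real" where
  "S g x = Sp g x - Sp (\<lambda>y. - g y) x"

lemma adj_real:
  assumes gm[measurable]: "g \<in> borel_measurable M" and C: "0 \<le> C" and gC: "AE x in M. g x \<le> C"
    and F: "nnint F"
  shows "(\<integral>x. Sp g x * F x \<partial>M) = (\<integral>x. pp g x * Tp F x \<partial>M)"
proof -
  have Fi: "integrable M F" using F by (simp add: nnint_def)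
  have b1: "AE x in M. \<bar>Sp g x\<bar> \<le> C" using Sp_bound[OF gm C gC] by (auto elim!: eventually_mono simp: Sp_nonneg)
  have b2: "AE x in M. \<bar>pp g x\<bar> \<le> C" using gC C by (auto elim!: eventually_mono simp: pp_def)
  have i1: "integrable M (\<lambda>x. Sp g x * F x)" by (rule int_bdd_mult[OF Sp_meas b1 Fi])
  have i2: "integrable M (\<lambda>x. pp g x * Tp F x)" by (rule int_bdd_mult[OF pp_meas[OF gm] b2 Tp_int(1)[OF F]])
  have "ennreal (\<integral>x. Sp g x * F x \<partial>M) = (\<integral>\<^sup>+x. ennreal (Sp g x * F x) \<partial>M)"
    by (rule nn_integral_eq_integral[OF i1, symmetric]) (use F in \<open>auto simp: nnint_def Sp_nonneg intro!: AE_I2\<close>)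
  also have "\<dots> = (\<integral>\<^sup>+x. ennreal (Sp g x) * ennreal (F x) \<partial>M)"
    by (intro nn_integral_cong) (simp add: ennreal_mult' Sp_nonneg)
  also have "\<dots> = (\<integral>\<^sup>+x. ennreal (g x) * ennreal (Tp F x) \<partial>M)" by (rule adj_nn[OF gm C gC F])
  also have "\<dots> = (\<integral>\<^sup>+x. ennreal (pp g x * Tp F x) \<partial>M)"
    by (intro nn_integral_cong) (simp add: ennreal_mult pp_nonneg Tp_nonneg ennreal_pp)
  also have "\<dots> = ennreal (\<integral>x. pp g x * Tp F x \<partial>M)"
    by (rule nn_integral_eq_integral[OF i2]) (auto simp: pp_nonneg Tp_nonneg)
  finally show ?thesis
    by (subst (asm) ennreal_inj) (auto intro!: integral_nonneg_AE simp: pp_nonneg Tp_nonneg Sp_nonneg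
        mult_nonneg_nonneg AE_I2 nnintD(2)[OF F])
qed

lemma S_adj:
  assumes g: "linf M g" and f: "integrable M f"
  shows "(\<integral>x. S g x * f x \<partial>M) = (\<integral>x. g x * T f x \<partial>M)"
proof -
  obtain C where C: "0 \<le> C" and gC: "AE x in M. \<bar>g x\<bar> \<le> C" using linf_bound[OF g] by auto
  have gm[measurable]: "g \<in> borel_measurable M" using g by (simp add: linf_def)
  have g1: "AE x in M. g x \<le> C" and g2: "AE x in M. - g x \<le> C" using gC by (auto elim!: eventually_mono)
  have ngm: "(\<lambda>y. - g y) \<in> borel_measurable M" by simp
  have nP: "nnint (pp f)" and nN: "nnint (nn f)" using nnint_pp[OF f] nnint_nn[OF f] .
  have iP: "integrable M (pp f)" and iN: "integrable M (nn f)" using f by (auto intro: pp_int nn_int)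
  have e1: "(\<integral>x. Sp g x * pp f x \<partial>M) = (\<integral>x. pp g x * Tp (pp f) x \<partial>M)" by (rule adj_real[OF gm C g1 nP])
  have e2: "(\<integral>x. Sp g x * nn f x \<partial>M) = (\<integral>x. pp g x * Tp (nn f) x \<partial>M)" by (rule adj_real[OF gm C g1 nN])
  have e3: "(\<integral>x. Sp (\<lambda>y. - g y) x * pp f x \<partial>M) = (\<integral>x. nn g x * Tp (pp f) x \<partial>M)"
    using adj_real[OF ngm C g2 nP] by (simp add: pp_neg)
  have e4: "(\<integral>x. Sp (\<lambda>y. - g y) x * nn f x \<partial>M) = (\<integral>x. nn g x * Tp (nn f) x \<partial>M)"
    using adj_real[OF ngm C g2 nN] by (simp add: pp_neg)
  have bS1: "AE x in M. \<bar>Sp g x\<bar> \<le> C" using Sp_bound[OF gm C g1] by (auto elim!: eventually_mono simp: Sp_nonneg)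
  have bS2: "AE x in M. \<bar>Sp (\<lambda>y. - g y) x\<bar> \<le> C" using Sp_bound[OF ngm C g2] by (auto elim!: eventually_mono simp: Sp_nonneg)
  have bp: "AE x in M. \<bar>pp g x\<bar> \<le> C" and bn: "AE x in M. \<bar>nn g x\<bar> \<le> C"
    using gC by (auto elim!: eventually_mono simp: pp_def nn_def)
  have TP: "integrable M (Tp (pp f))" and TN: "integrable M (Tp (nn f))" using Tp_int(1) nP nN by auto
  have a1: "integrable M (\<lambda>x. Sp g x * pp f x)" by (rule int_bdd_mult[OF Sp_meas bS1 iP])
  have a2: "integrable M (\<lambda>x. Sp g x * nn f x)" by (rule int_bdd_mult[OF Sp_meas bS1 iN])
  have a3: "integrable M (\<lambda>x. Sp (\<lambda>y. - g y) x * pp f x)" by (rule int_bdd_mult[OF Sp_meas bS2 iP])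
  have a4: "integrable M (\<lambda>x. Sp (\<lambda>y. - g y) x * nn f x)" by (rule int_bdd_mult[OF Sp_meas bS2 iN])
  have b1: "integrable M (\<lambda>x. pp g x * Tp (pp f) x)" by (rule int_bdd_mult[OF pp_meas[OF gm] bp TP])
  have b2: "integrable M (\<lambda>x. pp g x * Tp (nn f) x)" by (rule int_bdd_mult[OF pp_meas[OF gm] bp TN])
  have b3: "integrable M (\<lambda>x. nn g x * Tp (pp f) x)" by (rule int_bdd_mult[OF nn_meas[OF gm] bn TP])
  have b4: "integrable M (\<lambda>x. nn g x * Tp (nn f) x)" by (rule int_bdd_mult[OF nn_meas[OF gm] bn TN])
  have L: "(\<lambda>x. S g x * f x) = (\<lambda>x. (Sp g x * pp f x - Sp g x * nn f x) - (Sp (\<lambda>y. - g y) x * pp f x - Sp (\<lambda>y. - g y) x * nn f x))"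
    by (auto simp: fun_eq_iff S_def algebra_simps pp_nn_diff[of f])
  have R: "(\<lambda>x. g x * T f x) = (\<lambda>x. (pp g x * Tp (pp f) x - pp g x * Tp (nn f) x) - (nn g x * Tp (pp f) x - nn g x * Tp (nn f) x))"
    by (auto simp: fun_eq_iff T_def algebra_simps pp_nn_diff[of g])
  have "(\<integral>x. S g x * f x \<partial>M) = ((\<integral>x. Sp g x * pp f x \<partial>M) - (\<integral>x. Sp g x * nn f x \<partial>M)) -
      ((\<integral>x. Sp (\<lambda>y. - g y) x * pp f x \<partial>M) - (\<integral>x. Sp (\<lambda>y. - g y) x * nn f x \<partial>M))"
    unfolding L using a1 a2 a3 a4 by (simp add: Bochner_Integration.integral_diff)
  also have "\<dots> = ((\<integral>x. pp g x * Tp (pp f) x \<partial>M) - (\<integral>x. pp g x * Tp (nn f) x \<partial>M)) -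
      ((\<integral>x. nn g x * Tp (pp f) x \<partial>M) - (\<integral>x. nn g x * Tp (nn f) x \<partial>M))"
    using e1 e2 e3 e4 by simp
  also have "\<dots> = (\<integral>x. g x * T f x \<partial>M)"
    unfolding R using b1 b2 b3 b4 by (simp add: Bochner_Integration.integral_diff)
  finally show ?thesis .
qed

lemma S_linf: "linf M g \<Longrightarrow> linf M (S g)"
proof -
  assume g: "linf M g"
  obtain C where C: "0 \<le> C" and gC: "AE x in M. \<bar>g x\<bar> \<le> C" using linf_bound[OF g] by auto
  have gm[measurable]: "g \<in> borel_measurable M" using g by (simp add: linf_def)
  have g1: "AE x in M. g x \<le> C" and g2: "AE x in M. - g x \<le> C" using gC by (auto elim!: eventually_mono)
  have ngm: "(\<lambda>y. - g y) \<in> borel_measurable M" by simp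
  from Sp_bound[OF gm C g1] Sp_bound[OF ngm C g2]
  have "AE x in M. \<bar>S g x\<bar> \<le> C"
  proof eventually_elim
    case (elim x)
    have "0 \<le> Sp g x" "0 \<le> Sp (\<lambda>y. - g y) x" by (simp_all add: Sp_nonneg)
    with elim show ?case by (simp add: S_def abs_le_iff)
  qed
  then show "linf M (S g)" unfolding linf_def S_def[abs_def] by auto
qed

lemma S_int:
  assumes g: "linf M g" and gi: "integrable M g"
  shows "integrable M (S g) \<and> (\<integral>x. S g x \<partial>M) = (\<integral>x. g x \<partial>M)"
proof -
  obtain C where C: "0 \<le> C" and gC: "AE x in M. \<bar>g x\<bar> \<le> C" using linf_bound[OF g] by auto
  have gm[measurable]: "g \<in> borel_measurable M" using g by (simp add: linf_def)
  have g1: "AE x in M. g x \<le> C" and g2: "AE x in M. - g x \<le> C" using gC by (auto elim!: eventually_mono)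
  have ngm: "(\<lambda>y. - g y) \<in> borel_measurable M" by simp
  have one: "integrable M (Sp h) \<and> (\<integral>x. Sp h x \<partial>M) = (\<integral>x. pp h x \<partial>M)"
    if hm: "h \<in> borel_measurable M" and hC: "AE x in M. h x \<le> C" and hi: "integrable M h" for h
  proof -
    have tot: "(\<integral>\<^sup>+x. ennreal (Sp h x) \<partial>M) = (\<integral>\<^sup>+x. ennreal (pp h x) \<partial>M)"
      using Sp_total[OF hm C hC] by (simp add: ennreal_pp)
    have pi: "integrable M (pp h)" using hi by (rule pp_int)
    have pe: "(\<integral>\<^sup>+x. ennreal (pp h x) \<partial>M) = ennreal (\<integral>x. pp h x \<partial>M)"
      by (rule nn_integral_eq_integral[OF pi]) (simp add: pp_nonneg)
    have si: "integrable M (Sp h)"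
      by (rule integrableI_nonneg) (use tot pe in \<open>auto simp: Sp_nonneg\<close>)
    have "ennreal (\<integral>x. Sp h x \<partial>M) = ennreal (\<integral>x. pp h x \<partial>M)"
      using nn_integral_eq_integral[OF si] tot pe by (simp add: Sp_nonneg)
    then have "(\<integral>x. Sp h x \<partial>M) = (\<integral>x. pp h x \<partial>M)"
      by (subst (asm) ennreal_inj) (auto intro!: integral_nonneg_AE simp: Sp_nonneg pp_nonneg)
    with si show ?thesis by simp
  qed
  have o1: "integrable M (Sp g) \<and> (\<integral>x. Sp g x \<partial>M) = (\<integral>x. pp g x \<partial>M)" by (rule one[OF gm g1 gi])
  have o2: "integrable M (Sp (\<lambda>y. - g y)) \<and> (\<integral>x. Sp (\<lambda>y. - g y) x \<partial>M) = (\<integral>x. nn g x \<partial>M)"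
    using one[OF ngm g2] gi by (simp add: pp_neg)
  have "integrable M (S g)" unfolding S_def[abs_def] using o1 o2 by simp
  moreover have "(\<integral>x. S g x \<partial>M) = (\<integral>x. pp g x \<partial>M) - (\<integral>x. nn g x \<partial>M)"
    unfolding S_def using o1 o2 by (simp add: Bochner_Integration.integral_diff)
  moreover have "\<dots> = (\<integral>x. g x \<partial>M)"
    using gi pp_int[OF gi] nn_int[OF gi] by (simp add: Bochner_Integration.integral_diff[symmetric] pp_nn_diff[symmetric])
  ultimately show ?thesis by simp
qed

lemma S_pos:
  assumes g: "linf M g" and gp: "AE x in M. 0 \<le> g x"
  shows "(\<integral>\<^sup>+x. ennreal (S g x) \<partial>M) = (\<integral>\<^sup>+x. ennreal (g x) \<partial>M)"
proof -
  obtain C where C: "0 \<le> C" and gC: "AE x in M. \<bar>g x\<bar> \<le> C" using linf_bound[OF g] by auto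
  have gm[measurable]: "g \<in> borel_measurable M" using g by (simp add: linf_def)
  have g1: "AE x in M. g x \<le> C" and g2: "AE x in M. - g x \<le> C" using gC by (auto elim!: eventually_mono)
  have ngm: "(\<lambda>y. - g y) \<in> borel_measurable M" by simp
  have "(\<integral>\<^sup>+x. ennreal (Sp (\<lambda>y. - g y) x) \<partial>M) = (\<integral>\<^sup>+x. ennreal (- g x) \<partial>M)"
    by (rule Sp_total[OF ngm C g2])
  also have "\<dots> = (\<integral>\<^sup>+x. 0 \<partial>M)"
    using gp by (intro nn_integral_cong_AE) (auto elim!: eventually_mono simp: ennreal_neg)
  finally have "(\<integral>\<^sup>+x. ennreal (Sp (\<lambda>y. - g y) x) \<partial>M) = 0" by simp
  then have "AE x in M. ennreal (Sp (\<lambda>y. - g y) x) = 0"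
    by (subst (asm) nn_integral_0_iff_AE) auto
  then have z: "AE x in M. Sp (\<lambda>y. - g y) x = 0"
    by (auto elim!: eventually_mono simp: ennreal_eq_0_iff intro: antisym Sp_nonneg)
  have "(\<integral>\<^sup>+x. ennreal (S g x) \<partial>M) = (\<integral>\<^sup>+x. ennreal (Sp g x) \<partial>M)"
    using z by (intro nn_integral_cong_AE) (auto elim!: eventually_mono simp: S_def)
  also have "\<dots> = (\<integral>\<^sup>+x. ennreal (g x) \<partial>M)" by (rule Sp_total[OF gm C g1])
  finally show ?thesis .
qed

lemma S_adjoint: "l1_adjoint M T S"
  unfolding l1_adjoint_def using S_linf S_adj by auto

lemma T_doubly: "doubly_stochastic M T"
proof -
  have semi: "(\<integral>\<^sup>+x. ennreal (S (indicator E) x) \<partial>M) \<le> emeasure M E"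
    if E: "E \<in> sets M" "emeasure M E < \<infinity>" for E
  proof -
    have l: "linf M (indicator E)" unfolding linf_def using E by (auto intro!: exI[of _ 1] split: split_indicator)
    have "(\<integral>\<^sup>+x. ennreal (S (indicator E) x) \<partial>M) = (\<integral>\<^sup>+x. ennreal (indicator E x) \<partial>M)"
      by (rule S_pos[OF l]) auto
    also have "\<dots> = emeasure M E" using E by (simp add: ennreal_indicator)
    finally show ?thesis by simp
  qed
  show ?thesis
    unfolding doubly_stochastic_def semi_doubly_stochastic_def
    using T_markov S_adjoint semi S_int S_pos by blast
qed

end

theorem theorem3p1:
  fixes M :: "'a measure" and A :: "nat \<Rightarrow> 'a set"
    and D :: "('a \<Rightarrow> real) \<Rightarrow> ('a \<Rightarrow> real)"
  assumes sf: "sigma_finite_measure M"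
    and A_sets: "\<And>n. A n \<in> sets M"
    and A_fin: "\<And>n. emeasure M (A n) < \<infinity>"
    and A_mono: "\<And>n. A n \<subseteq> A (Suc n)"
    and A_cover: "(\<Union>n. A n) = space M"
    and D_L1: "\<And>f. f \<in> simple_L1 M \<Longrightarrow> integrable M (D f)"
    and D_welldef: "\<And>f g. f \<in> simple_L1 M \<Longrightarrow> g \<in> simple_L1 M \<Longrightarrow>
        (AE x in M. f x = g x) \<Longrightarrow> (AE x in M. D f x = D g x)"
    and D_add: "\<And>f g. f \<in> simple_L1 M \<Longrightarrow> g \<in> simple_L1 M \<Longrightarrow>
        (AE x in M. D (\<lambda>y. f y + g y) x = D f x + D g x)"
    and D_scale: "\<And>f c. f \<in> simple_L1 M \<Longrightarrow>
        (AE x in M. D (\<lambda>y. c * f y) x = c * D f x)"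
  shows "((\<exists>T. doubly_stochastic M T \<and> (\<forall>f\<in>simple_L1 M. AE x in M. T f x = D f x)) \<and>
          (\<forall>T1 T2. doubly_stochastic M T1 \<and> (\<forall>f\<in>simple_L1 M. AE x in M. T1 f x = D f x) \<and>
                   doubly_stochastic M T2 \<and> (\<forall>f\<in>simple_L1 M. AE x in M. T2 f x = D f x) \<longrightarrow>
                   (\<forall>f. integrable M f \<longrightarrow> (AE x in M. T1 f x = T2 f x))))
     \<longleftrightarrow>
         ((\<forall>f\<in>simple_L1 M. (AE x in M. 0 \<le> f x) \<longrightarrow> (AE x in M. 0 \<le> D f x)) \<and>
          (\<forall>E\<in>sets M. emeasure M E < \<infinity> \<longrightarrow>
             (\<integral>x. D (indicator E) x \<partial>M) = measure M E \<and>
             (\<lambda>n. \<integral>x. indicator E x * D (indicator (A n)) x \<partial>M) \<longlonglongrightarrow> measure M E))"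
  (is "?L \<longleftrightarrow> ?R")
proof
  interpret dsetup M A D
    by (rule dsetup.intro) (fact assms)+
  assume L: ?L
  then obtain T0 where T0: "doubly_stochastic M T0" and ext: "\<forall>f\<in>simple_L1 M. AE x in M. T0 f x = D f x"
    by blast
  have mk: "markov_operator M T0" using T0 by (simp add: doubly_stochastic_def semi_doubly_stochastic_def)
  have l1: "l1_operator M T0" using mk by (simp add: markov_operator_def)
  obtain S0 where adj: "l1_adjoint M T0 S0" and dc: "\<And>g. linf M g \<Longrightarrow> integrable M g \<Longrightarrow>
      integrable M (S0 g) \<and> (\<integral>x. S0 g x \<partial>M) = (\<integral>x. g x \<partial>M)"
    using T0 unfolding doubly_stochastic_def by blast
  have pos: "\<forall>f\<in>simple_L1 M. (AE x in M. 0 \<le> f x) \<longrightarrow> (AE x in M. 0 \<le> D f x)"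
  proof (intro ballI impI)
    fix f assume f: "f \<in> simple_L1 M" and nn: "AE x in M. 0 \<le> f x"
    have "AE x in M. 0 \<le> T0 f x" using mk f nn by (auto simp: markov_operator_def simple_L1_def)
    with ext f show "AE x in M. 0 \<le> D f x" by (auto elim: AE_mp)
  qed
  have rest: "(\<integral>x. D (indicator E) x \<partial>M) = measure M E \<and>
             (\<lambda>n. \<integral>x. indicator E x * D (indicator (A n)) x \<partial>M) \<longlonglongrightarrow> measure M E"
    if E: "E \<in> sets M" "emeasure M E < \<infinity>" for E
  proof
    have sE: "indicator E \<in> simple_L1 M" using sL_ind[OF E] .
    have iE: "integrable M (indicator E :: 'a \<Rightarrow> real)" using sE by (simp add: simple_L1_def)
    have EE: "E \<inter> space M = E" using E sets.sets_into_space by auto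
    have "(\<integral>x. D (indicator E) x \<partial>M) = (\<integral>x. T0 (indicator E) x \<partial>M)"
      using ext sE l1 iE D_L1[OF sE]
      by (intro integral_cong_AE) (auto simp: l1_operator_def elim!: eventually_mono)
    also have "\<dots> = measure M E" using mk iE EE by (simp add: markov_operator_def)
    finally show "(\<integral>x. D (indicator E) x \<partial>M) = measure M E" .
    have lE: "linf M (indicator E)" unfolding linf_def using E by (auto intro!: exI[of _ 1] split: split_indicator)
    have Si: "integrable M (S0 (indicator E))" and Sint: "(\<integral>x. S0 (indicator E) x \<partial>M) = measure M E"
      using dc[OF lE iE] EE by auto
    have eq: "(\<integral>x. indicator E x * D (indicator (A n)) x \<partial>M) = (\<integral>x. S0 (indicator E) x * indicator (A n) x \<partial>M)" for n
    proof -
      have sA: "indicator (A n) \<in> simple_L1 M" using sL_ind[OF A_sets A_fin] .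
      have iA: "integrable M (indicator (A n) :: 'a \<Rightarrow> real)" using sA by (simp add: simple_L1_def)
      have mT: "T0 (indicator (A n)) \<in> borel_measurable M" using l1 iA by (auto simp: l1_operator_def)
      have mD: "D (indicator (A n)) \<in> borel_measurable M" using D_L1[OF sA] by auto
      have "(\<integral>x. indicator E x * D (indicator (A n)) x \<partial>M) = (\<integral>x. indicator E x * T0 (indicator (A n)) x \<partial>M)"
        using ext sA E mT mD by (intro integral_cong_AE) (auto elim!: eventually_mono)
      also have "\<dots> = (\<integral>x. S0 (indicator E) x * indicator (A n) x \<partial>M)"
        using adj lE iA unfolding l1_adjoint_def by auto
      finally show ?thesis .
    qed
    have "(\<lambda>n. \<integral>x. S0 (indicator E) x * indicator (A n) x \<partial>M) \<longlonglongrightarrow> (\<integral>x. S0 (indicator E) x \<partial>M)"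
    proof (rule integral_dominated_convergence[where w="\<lambda>x. \<bar>S0 (indicator E) x\<bar>"])
      show "S0 (indicator E) \<in> borel_measurable M" using Si by auto
      show "(\<lambda>x. S0 (indicator E) x * indicator (A n) x) \<in> borel_measurable M" for n
        using Si A_sets[of n] by auto
      show "integrable M (\<lambda>x. \<bar>S0 (indicator E) x\<bar>)" using Si by auto
      show "AE x in M. (\<lambda>n. S0 (indicator E) x * indicator (A n) x) \<longlonglongrightarrow> S0 (indicator E) x"
      proof (rule AE_I2)
        fix x assume "x \<in> space M"
        from tendsto_mult[OF tendsto_const A_ind_lim[OF this], of "S0 (indicator E) x"]
        show "(\<lambda>n. S0 (indicator E) x * indicator (A n) x) \<longlonglongrightarrow> S0 (indicator E) x" by simp
      qed
      show "AE x in M. norm (S0 (indicator E) x * indicator (A n) x) \<le> \<bar>S0 (indicator E) x\<bar>" for n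
        by (auto split: split_indicator)
    qed
    then show "(\<lambda>n. \<integral>x. indicator E x * D (indicator (A n)) x \<partial>M) \<longlonglongrightarrow> measure M E"
      unfolding eq Sint .
  qed
  show ?R using pos rest by blast
next
  assume R: ?R
  interpret dpos M A D
  proof (rule dpos.intro)
    show "dsetup M A D" by (rule dsetup.intro) (fact assms)+
    show "dpos_axioms M A D" by (rule dpos_axioms.intro) (use R in auto)
  qed
  have ex: "\<exists>T. doubly_stochastic M T \<and> (\<forall>f\<in>simple_L1 M. AE x in M. T f x = D f x)"
    using T_doubly T_ext by blast
  have un: "\<forall>T1 T2. doubly_stochastic M T1 \<and> (\<forall>f\<in>simple_L1 M. AE x in M. T1 f x = D f x) \<and>
                   doubly_stochastic M T2 \<and> (\<forall>f\<in>simple_L1 M. AE x in M. T2 f x = D f x) \<longrightarrow>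
                   (\<forall>f. integrable M f \<longrightarrow> (AE x in M. T1 f x = T2 f x))"
  proof (intro allI impI)
    fix T1 T2 and f :: "'a \<Rightarrow> real"
    assume H: "doubly_stochastic M T1 \<and> (\<forall>f\<in>simple_L1 M. AE x in M. T1 f x = D f x) \<and>
                   doubly_stochastic M T2 \<and> (\<forall>f\<in>simple_L1 M. AE x in M. T2 f x = D f x)"
      and f: "integrable M f"
    have m1: "markov_operator M T1" and m2: "markov_operator M T2"
      using H by (auto simp: doubly_stochastic_def semi_doubly_stochastic_def)
    have e1: "\<forall>f\<in>simple_L1 M. AE x in M. T1 f x = D f x" and e2: "\<forall>f\<in>simple_L1 M. AE x in M. T2 f x = D f x"
      using H by auto
    have u1: "AE x in M. T1 f x = T f x" by (rule markov_unique) (fact m1 e1 f)+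
    have u2: "AE x in M. T2 f x = T f x" by (rule markov_unique) (fact m2 e2 f)+
    from u1 u2 show "AE x in M. T1 f x = T2 f x" by eventually_elim simp
  qed
  show ?L using ex un by blast
qed


end
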